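(* Let $\Lambda^\omega$ be the set of germs at $o=(0,0)$ of maps $F(x,y)=(f(x,y),x,y)$ into $\mathbf{R}^3_1$, where $f$ is a real analytic function germ at $o$ with $f(0,0)=0$, $f_x(0,0)=0$, $f_y(0,0)=1$, such that $B_F:=1-f_x^2-f_y^2$ vanishes identically. Let $C^\omega_o(\mathbf{R},0_2)$ be the set of germs at $0$ of real analytic functions $\psi$ with $\psi(0)=\psi'(0)=0$. Then the map $\Lambda^\omega\ni F\mapsto f(x,0)\in C^\omega_o(\mathbf{R},0_2)$ is bijective.
   Context: $\mathbf{R}^3_1$ is Lorentz–Minkowski 3-space with coordinates $(t,x,y)$ and inner product $-dt^2+dx^2+dy^2$; elements of $\Lambda^\omega$ are light-like (degenerate) real analytic surface germs written as graphs over the $xy$-plane. *)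

theory Defs
  imports "HOL-Analysis.Analysis"
begin

definition real_analytic_at0_1 :: "(real \<Rightarrow> real) \<Rightarrow> bool" where
  "real_analytic_at0_1 \<psi> \<longleftrightarrow>
     (\<exists>r>0. \<exists>a :: nat \<Rightarrow> real. \<forall>x. \<bar>x\<bar> < r \<longrightarrow>
        ((\<lambda>i. a i * x ^ i) has_sum \<psi> x) UNIV)"

definition real_analytic_at0_2 :: "(real \<times> real \<Rightarrow> real) \<Rightarrow> bool" where
  "real_analytic_at0_2 f \<longleftrightarrow>
     (\<exists>r>0. \<exists>a :: nat \<Rightarrow> nat \<Rightarrow> real. \<forall>x y. \<bar>x\<bar> < r \<and> \<bar>y\<bar> < r \<longrightarrow>
        ((\<lambda>(i, j). a i j * x ^ i * y ^ j) has_sum f (x, y)) UNIV)"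

definition pdx :: "(real \<times> real \<Rightarrow> real) \<Rightarrow> real \<times> real \<Rightarrow> real" where
  "pdx f p = deriv (\<lambda>s. f (s, snd p)) (fst p)"

definition pdy :: "(real \<times> real \<Rightarrow> real) \<Rightarrow> real \<times> real \<Rightarrow> real" where
  "pdy f p = deriv (\<lambda>t. f (fst p, t)) (snd p)"

text \<open>The defining function f of an element F = (f,x,y) of Lambda^omega
  (light-like graph: B_F = 1 - f_x^2 - f_y^2 vanishes identically as a germ).\<close>
definition Lambda_omega :: "(real \<times> real \<Rightarrow> real) set" where
  "Lambda_omega = {f. real_analytic_at0_2 f \<and> f (0, 0) = 0 \<and>
      pdx f (0, 0) = 0 \<and> pdy f (0, 0) = 1 \<and>
      (\<forall>\<^sub>F p in nhds (0, 0). 1 - (pdx f p)\<^sup>2 - (pdy f p)\<^sup>2 = 0)}"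

definition C_omega_02 :: "(real \<Rightarrow> real) set" where
  "C_omega_02 = {\<psi>. real_analytic_at0_1 \<psi> \<and> \<psi> 0 = 0 \<and> deriv \<psi> 0 = 0}"

end

theory Submission
  imports Defs "HOL-Complex_Analysis.Complex_Analysis"
begin

definition PS1 :: "(nat \<Rightarrow> real) \<Rightarrow> real \<Rightarrow> (real \<Rightarrow> real) \<Rightarrow> bool" where
 "PS1 b r C \<longleftrightarrow> (\<forall>x. \<bar>x\<bar> < r \<longrightarrow> ((\<lambda>i. b i * x^i) has_sum C x) UNIV)"

lemma hs_real_nat:
  fixes f :: "nat \<Rightarrow> real" assumes "(f has_sum S) UNIV"
  shows "summable (\<lambda>n. \<bar>f n\<bar>)" "f sums S"
proof -
  have "f summable_on UNIV" using assms by (auto simp: summable_on_def)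
  hence "(\<lambda>n. norm (f n)) summable_on UNIV" using summable_on_iff_abs_summable_on_real by blast
  thus "summable (\<lambda>n. \<bar>f n\<bar>)" by (simp add: summable_on_UNIV_nonneg_real_iff)
  show "f sums S" using has_sum_imp_sums assms .
qed

lemma sums_abs_imp_has_sum:
  fixes f :: "nat \<Rightarrow> real"
  shows "summable (\<lambda>n. \<bar>f n\<bar>) \<Longrightarrow> f sums S \<Longrightarrow> (f has_sum S) UNIV"
  using norm_summable_imp_has_sum[of f S] by simp

lemma PS1_abs_summable:
  assumes "PS1 b r C" "\<bar>z\<bar> < r"
  shows "summable (\<lambda>n. \<bar>b n\<bar> * \<bar>z\<bar>^n)" "summable (\<lambda>n. b n * z^n)"
proof -
  have h: "((\<lambda>i. b i * z^i) has_sum C z) UNIV" using assms unfolding PS1_def by auto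
  from hs_real_nat(1)[OF h] show "summable (\<lambda>n. \<bar>b n\<bar> * \<bar>z\<bar>^n)" by (simp add: abs_mult power_abs)
  from hs_real_nat(2)[OF h] show "summable (\<lambda>n. b n * z^n)" by (simp add: sums_summable)
qed

lemma PS1_eq_suminf:
  assumes "PS1 b r C" "\<bar>z\<bar> < r"
  shows "C z = (\<Sum>n. b n * z^n)"
proof -
  have h: "((\<lambda>i. b i * z^i) has_sum C z) UNIV" using assms unfolding PS1_def by auto
  from hs_real_nat(2)[OF h] show ?thesis by (simp add: sums_unique)
qed

lemma PS1_deriv:
  assumes "PS1 b r C" "\<bar>x\<bar> < r"
  shows "(C has_real_derivative (\<Sum>i. diffs b i * x^i)) (at x)"
proof -
  define K where "K = (\<bar>x\<bar> + r) / 2"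
  have K: "\<bar>x\<bar> < K" "K < r" using assms(2) by (auto simp: K_def)
  have s: "summable (\<lambda>n. b n * K^n)" using PS1_abs_summable(2)[OF assms(1), of K] K by auto
  have d: "DERIV (\<lambda>x. \<Sum>n. b n * x^n) x :> (\<Sum>n. diffs b n * x^n)"
    by (rule termdiffs_strong[OF s]) (use K in auto)
  show ?thesis
    by (rule has_field_derivative_transform_within_open[OF d, of "ball 0 r"])
       (use assms PS1_eq_suminf[OF assms(1)] in \<open>auto simp: dist_real_def\<close>)
qed

lemma PS1_diffs:
  assumes "PS1 b r C"
  shows "PS1 (diffs b) r (\<lambda>x. \<Sum>i. diffs b i * x^i)"
  unfolding PS1_def
proof (intro allI impI)
  fix z :: real assume z: "\<bar>z\<bar> < r"
  have sa: "summable (\<lambda>n. \<bar>b n\<bar> * x^n)" if "norm x < r" for x :: real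
  proof -
    have "summable (\<lambda>n. \<bar>b n\<bar> * \<bar>x\<bar>^n)" using PS1_abs_summable(1)[OF assms, of x] that by auto
    thus ?thesis
      by (rule summable_comparison_test[rotated]) (auto simp: abs_mult power_abs intro!: exI[of _ 0])
  qed
  have "summable (\<lambda>n. diffs (\<lambda>n. \<bar>b n\<bar>) n * \<bar>z\<bar>^n)"
    by (rule termdiff_converges[of _ r]) (use z sa in auto)
  hence s1: "summable (\<lambda>n. \<bar>diffs b n * z^n\<bar>)"
    by (simp add: diffs_def abs_mult power_abs)
  hence "summable (\<lambda>n. diffs b n * z^n)" using summable_norm_cancel[of "\<lambda>n. diffs b n * z^n"] by simp
  thus "((\<lambda>i. diffs b i * z^i) has_sum (\<Sum>i. diffs b i * z^i)) UNIV"
    using sums_abs_imp_has_sum[OF s1] summable_sums by blast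
qed

definition PS2 :: "(nat \<Rightarrow> nat \<Rightarrow> real) \<Rightarrow> real \<Rightarrow> (real \<times> real \<Rightarrow> real) \<Rightarrow> bool" where
 "PS2 a r F \<longleftrightarrow> (\<forall>x y. \<bar>x\<bar> < r \<and> \<bar>y\<bar> < r \<longrightarrow>
        ((\<lambda>(i, j). a i j * x ^ i * y ^ j) has_sum F (x, y)) UNIV)"

definition ccoef :: "(nat \<Rightarrow> nat \<Rightarrow> real) \<Rightarrow> real \<Rightarrow> nat \<Rightarrow> real" where
 "ccoef a x j = (\<Sum>\<^sub>\<infinity>i. a i j * x^i)"

lemma has_sum_swap_UNIV:
  "((\<lambda>(i,j). f i j) has_sum S) UNIV \<longleftrightarrow> ((\<lambda>(j,i). f i j) has_sum S) UNIV"
proof -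
  have "bij_betw prod.swap (UNIV::('a\<times>'b) set) UNIV" by (simp add: bij_betwI')
  from has_sum_reindex_bij_betw[OF this, of "\<lambda>(j,i). f i j" S] show ?thesis
    by (simp add: split_beta')
qed

lemma PS2_swap:
  assumes "PS2 a r F"
  shows "PS2 (\<lambda>i j. a j i) r (\<lambda>p. F (snd p, fst p))"
  unfolding PS2_def
proof (intro allI impI)
  fix x y :: real assume "\<bar>x\<bar> < r \<and> \<bar>y\<bar> < r"
  hence "((\<lambda>(i, j). a i j * y ^ i * x ^ j) has_sum F (y, x)) UNIV" using assms unfolding PS2_def by auto
  hence "((\<lambda>(j, i). a i j * y ^ i * x ^ j) has_sum F (y, x)) UNIV" using has_sum_swap_UNIV by blast
  thus "((\<lambda>(i, j). a j i * x ^ i * y ^ j) has_sum F (snd (x, y), fst (x, y))) UNIV"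
    by (simp add: mult_ac)
qed

lemma PS2_col_summable:
  assumes "PS2 a r F" "\<bar>x\<bar> < r"
  shows "(\<lambda>i. a i j * x^i) summable_on UNIV"
proof -
  define y0 where "y0 = r / 2"
  have y0: "\<bar>y0\<bar> < r" "y0 \<noteq> 0" using assms(2) by (auto simp: y0_def)
  have "((\<lambda>(i, j). a i j * x ^ i * y0 ^ j) has_sum F (x, y0)) UNIV" using assms y0 unfolding PS2_def by auto
  hence "((\<lambda>(j, i). a i j * x ^ i * y0 ^ j) has_sum F (x, y0)) UNIV" using has_sum_swap_UNIV by blast
  hence "(\<lambda>(j, i). a i j * x ^ i * y0 ^ j) summable_on (Sigma UNIV (\<lambda>_. UNIV))"
    by (auto simp: summable_on_def)
  from summable_on_SigmaD1[OF this, of j] have "(\<lambda>i. a i j * x ^ i * y0 ^ j) summable_on UNIV" by simp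
  from summable_on_cmult_left[OF this, of "inverse (y0^j)"]
  have "(\<lambda>i. a i j * x ^ i * y0 ^ j * inverse (y0^j)) summable_on UNIV" .
  moreover have "(\<lambda>i. a i j * x ^ i * y0 ^ j * inverse (y0^j)) = (\<lambda>i. a i j * x ^ i)"
    by (rule ext) (simp add: y0 mult.assoc)
  ultimately show ?thesis by simp
qed

lemma PS2_col:
  assumes "PS2 a r F"
  shows "PS1 (\<lambda>i. a i j) r (\<lambda>x. ccoef a x j)"
  unfolding PS1_def ccoef_def using PS2_col_summable[OF assms] by auto

lemma PS2_rows:
  assumes "PS2 a r F" "\<bar>x\<bar> < r"
  shows "PS1 (ccoef a x) r (\<lambda>y. F (x, y))"
  unfolding PS1_def
proof (intro allI impI)
  fix y :: real assume y: "\<bar>y\<bar> < r"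
  have "((\<lambda>(i, j). a i j * x ^ i * y ^ j) has_sum F (x, y)) UNIV" using assms y unfolding PS2_def by auto
  hence "((\<lambda>(j, i). a i j * x ^ i * y ^ j) has_sum F (x, y)) (Sigma UNIV (\<lambda>_. UNIV))"
    using has_sum_swap_UNIV by auto
  hence h: "((\<lambda>p. a (snd p) (fst p) * x ^ snd p * y ^ fst p) has_sum F (x, y)) (Sigma UNIV (\<lambda>_. UNIV))"
    by (simp add: split_beta')
  show "((\<lambda>j. ccoef a x j * y ^ j) has_sum F (x, y)) UNIV"
  proof (rule has_sum_SigmaD[OF h])
    fix j :: nat
    have "((\<lambda>i. a i j * x^i) has_sum ccoef a x j) UNIV"
      unfolding ccoef_def using PS2_col_summable[OF assms] by auto
    from has_sum_cmult_left[OF this, of "y^j"]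
    show "((\<lambda>i. a (snd (j, i)) (fst (j, i)) * x ^ snd (j, i) * y ^ fst (j, i)) has_sum ccoef a x j * y ^ j) UNIV"
      by simp
  qed
qed

lemma PS2_cols:
  assumes "PS2 a r F" "\<bar>y\<bar> < r"
  shows "PS1 (ccoef (\<lambda>i j. a j i) y) r (\<lambda>x. F (x, y))"
  using PS2_rows[OF PS2_swap[OF assms(1)] assms(2)] by simp

lemma PS2_bound:
  assumes "PS2 a r F" "0 < \<rho>" "\<rho> < r"
  shows "\<exists>B. \<forall>i j. \<bar>a i j\<bar> * \<rho>^i * \<rho>^j \<le> B"
proof -
  let ?g = "\<lambda>(i,j). a i j * \<rho> ^ i * \<rho> ^ j"
  have "(?g has_sum F (\<rho>, \<rho>)) UNIV" using assms unfolding PS2_def by auto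
  hence "?g summable_on UNIV" by (auto simp: summable_on_def)
  hence s: "(\<lambda>p. \<bar>?g p\<bar>) summable_on UNIV" using summable_on_iff_abs_summable_on_real by auto
  show ?thesis
  proof (intro exI allI)
    fix i j
    have "(\<Sum>\<^sub>\<infinity>p\<in>{(i,j)}. \<bar>?g p\<bar>) \<le> (\<Sum>\<^sub>\<infinity>p. \<bar>?g p\<bar>)"
      by (rule infsum_mono_neutral) (use s in auto)
    thus "\<bar>a i j\<bar> * \<rho>^i * \<rho>^j \<le> (\<Sum>\<^sub>\<infinity>p. \<bar>?g p\<bar>)"
      using assms(2) by (simp add: abs_mult)
  qed
qed

lemma summable_Suc_geom:
  fixes t :: real assumes "0 \<le> t" "t < 1"
  shows "summable (\<lambda>n. real (Suc n) * t^n)"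
proof -
  have "summable (\<lambda>n. diffs (\<lambda>_. 1::real) n * t^n)"
    by (rule termdiff_converges[of _ 1]) (use assms in \<open>auto intro!: summable_geometric\<close>)
  thus ?thesis by (simp add: diffs_def)
qed

lemma product_summable_real:
  fixes g1 g2 :: "nat \<Rightarrow> real"
  assumes "summable g1" "summable g2" "\<And>n. g1 n \<ge> 0" "\<And>n. g2 n \<ge> 0"
  shows "(\<lambda>(i,j). g1 i * g2 j) summable_on UNIV"
proof -
  have h2: "(g2 has_sum suminf g2) UNIV"
    using assms by (intro norm_summable_imp_has_sum) (auto intro: summable_sums)
  have h1: "(g1 has_sum suminf g1) UNIV"
    using assms by (intro norm_summable_imp_has_sum) (auto intro: summable_sums)
  have "(\<lambda>p. g1 (fst p) * g2 (snd p)) summable_on (Sigma UNIV (\<lambda>_. UNIV))"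
  proof (rule summable_on_SigmaI)
    fix i :: nat
    show "((\<lambda>j. g1 (fst (i, j)) * g2 (snd (i, j))) has_sum g1 i * suminf g2) UNIV"
      using has_sum_cmult_right[OF h2, of "g1 i"] by simp
  next
    show "(\<lambda>i. g1 i * suminf g2) summable_on UNIV"
      using has_sum_cmult_left[OF h1, of "suminf g2"] by (auto simp: summable_on_def)
  qed (use assms in auto)
  thus ?thesis by (simp add: split_beta')
qed

definition Dx :: "(nat \<Rightarrow> nat \<Rightarrow> real) \<Rightarrow> real \<times> real \<Rightarrow> real" where
  "Dx a p = (\<Sum>i. diffs (ccoef (\<lambda>i j. a j i) (snd p)) i * (fst p)^i)"

lemma PS2_Dx_deriv:
  assumes "PS2 a r F" "\<bar>x\<bar> < r" "\<bar>y\<bar> < r"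
  shows "((\<lambda>t. F (t, y)) has_real_derivative Dx a (x, y)) (at x)"
  unfolding Dx_def using PS1_deriv[OF PS2_cols[OF assms(1,3)] assms(2)] by simp

lemma PS2_Dx:
  assumes "PS2 a r F"
  shows "PS2 (\<lambda>i j. real (Suc i) * a (Suc i) j) r (Dx a)"
  unfolding PS2_def
proof (intro allI impI)
  fix x y :: real assume xy: "\<bar>x\<bar> < r \<and> \<bar>y\<bar> < r"
  define \<rho> where "\<rho> = (max \<bar>x\<bar> \<bar>y\<bar> + r) / 2"
  have \<rho>: "0 < \<rho>" "\<rho> < r" "\<bar>x\<bar> < \<rho>" "\<bar>y\<bar> < \<rho>" using xy by (auto simp: \<rho>_def)
  obtain B where B: "\<And>i j. \<bar>a i j\<bar> * \<rho>^i * \<rho>^j \<le> B" using PS2_bound[OF assms \<rho>(1,2)] by blast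
  let ?h = "\<lambda>(i,j). real (Suc i) * a (Suc i) j * x ^ i * y ^ j"
  have sum1: "summable (\<lambda>i. real (Suc i) * (\<bar>x\<bar>/\<rho>)^i)"
    by (rule summable_Suc_geom) (use \<rho> in auto)
  have sum2: "summable (\<lambda>j. (\<bar>y\<bar>/\<rho>)^j)"
    by (rule summable_geometric) (use \<rho> in auto)
  have ps: "(\<lambda>(i,j). (B/\<rho> * (real (Suc i) * (\<bar>x\<bar>/\<rho>)^i)) * (\<bar>y\<bar>/\<rho>)^j) summable_on UNIV"
    apply (rule product_summable_real)
    using summable_mult[OF sum1, of "B/\<rho>"] sum2 \<rho> B[of 0 0] by auto
  have sh: "?h summable_on UNIV"
  proof -
    have "(\<lambda>p. \<bar>?h p\<bar>) summable_on UNIV"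
    proof (rule summable_on_comparison_test[OF ps])
      fix p :: "nat \<times> nat"
      obtain i j where p: "p = (i,j)" by force
      have "\<bar>a (Suc i) j\<bar> * \<rho>^(Suc i) * \<rho>^j \<le> B" using B by blast
      hence "\<bar>a (Suc i) j\<bar> \<le> B / (\<rho>^(Suc i) * \<rho>^j)" using \<rho> by (simp add: field_simps)
      hence "\<bar>a (Suc i) j\<bar> * (real (Suc i) * \<bar>x\<bar>^i * \<bar>y\<bar>^j) \<le> B / (\<rho>^(Suc i) * \<rho>^j) * (real (Suc i) * \<bar>x\<bar>^i * \<bar>y\<bar>^j)"
        by (rule mult_right_mono) auto
      also have "\<dots> = B/\<rho> * (real (Suc i) * (\<bar>x\<bar>/\<rho>)^i) * (\<bar>y\<bar>/\<rho>)^j"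
        using \<rho> by (simp add: field_simps power_divide)
      finally show "\<bar>?h p\<bar> \<le> (case p of (i,j) \<Rightarrow> B/\<rho> * (real (Suc i) * (\<bar>x\<bar>/\<rho>)^i) * (\<bar>y\<bar>/\<rho>)^j)"
        by (simp add: p abs_mult power_abs mult_ac)
    qed simp
    thus ?thesis using summable_on_iff_abs_summable_on_real by auto
  qed
  show "((\<lambda>(i, j). real (Suc i) * a (Suc i) j * x ^ i * y ^ j) has_sum Dx a (x, y)) UNIV"
  proof -
    have "((\<lambda>p. real (Suc (fst p)) * a (Suc (fst p)) (snd p) * x ^ (fst p) * y ^ (snd p)) has_sum Dx a (x, y)) (Sigma UNIV (\<lambda>_. UNIV))"
    proof (rule has_sum_SigmaI)
      fix i :: nat
      have "((\<lambda>j. a (Suc i) j * y^j) has_sum ccoef (\<lambda>i j. a j i) y (Suc i)) UNIV"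
        using PS2_col_summable[OF PS2_swap[OF assms], of y "Suc i"] xy by (simp add: ccoef_def)
      from has_sum_cmult_left[OF this, of "real (Suc i) * x^i"]
      show "((\<lambda>j. real (Suc (fst (i, j))) * a (Suc (fst (i, j))) (snd (i, j)) * x ^ fst (i, j) * y ^ snd (i, j)) has_sum
          diffs (ccoef (\<lambda>i j. a j i) y) i * x^i) UNIV"
        by (simp add: diffs_def mult_ac)
    next
      show "((\<lambda>i. diffs (ccoef (\<lambda>i j. a j i) y) i * x ^ i) has_sum Dx a (x, y)) UNIV"
        using PS1_diffs[OF PS2_cols[OF assms, of y]] xy unfolding PS1_def Dx_def by auto
    next
      show "(\<lambda>p. real (Suc (fst p)) * a (Suc (fst p)) (snd p) * x ^ fst p * y ^ snd p) summable_on Sigma UNIV (\<lambda>_. UNIV)"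
        using sh by (simp add: split_beta')
    qed
    thus ?thesis by (simp add: split_beta')
  qed
qed

definition Dy :: "(nat \<Rightarrow> nat \<Rightarrow> real) \<Rightarrow> real \<times> real \<Rightarrow> real" where
  "Dy a p = (\<Sum>j. diffs (ccoef a (fst p)) j * (snd p)^j)"

lemma PS2_Dy_deriv:
  assumes "PS2 a r F" "\<bar>x\<bar> < r" "\<bar>y\<bar> < r"
  shows "((\<lambda>t. F (x, t)) has_real_derivative Dy a (x, y)) (at y)"
  unfolding Dy_def using PS1_deriv[OF PS2_rows[OF assms(1,2)] assms(3)] by simp

lemma PS2_Dy:
  assumes "PS2 a r F"
  shows "PS2 (\<lambda>i j. real (Suc j) * a i (Suc j)) r (Dy a)"
proof -
  have h: "PS2 (\<lambda>i j. real (Suc i) * a j (Suc i)) r (Dx (\<lambda>i j. a j i))"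
    using PS2_Dx[OF PS2_swap[OF assms]] by simp
  have e: "Dy a = (\<lambda>p. \<Sum>i. diffs (ccoef a (fst p)) i * snd p ^ i)" by (auto simp: Dy_def fun_eq_iff)
  from PS2_swap[OF h] show ?thesis
    by (simp add: Dx_def e)
qed

lemma PS2_mono: "PS2 a r F \<Longrightarrow> r' \<le> r \<Longrightarrow> PS2 a r' F"
  unfolding PS2_def by auto

lemma has_sum_infsum_suminf:
  fixes f :: "nat \<Rightarrow> real"
  assumes "(f has_sum S) UNIV" shows "infsum f UNIV = suminf f"
  using assms hs_real_nat(2)[OF assms] by (simp add: infsumI sums_unique)

lemma ccoef_Dx:
  assumes "PS2 a r F" "\<bar>x\<bar> < r"
  shows "((\<lambda>t. ccoef a t j) has_real_derivative ccoef (\<lambda>i j. real (Suc i) * a (Suc i) j) x j) (at x)"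
proof -
  have d: "((\<lambda>t. ccoef a t j) has_real_derivative (\<Sum>i. diffs (\<lambda>i. a i j) i * x^i)) (at x)"
    using PS1_deriv[OF PS2_col[OF assms(1)] assms(2)] .
  have "((\<lambda>i. diffs (\<lambda>i. a i j) i * x^i) has_sum (\<Sum>i. diffs (\<lambda>i. a i j) i * x^i)) UNIV"
    using PS1_diffs[OF PS2_col[OF assms(1)]] assms(2) unfolding PS1_def by auto
  hence "ccoef (\<lambda>i j. real (Suc i) * a (Suc i) j) x j = (\<Sum>i. diffs (\<lambda>i. a i j) i * x^i)"
    unfolding ccoef_def diffs_def by (simp add: infsumI mult_ac)
  thus ?thesis using d by simp
qed

lemma ccoef_Dy:
  "ccoef (\<lambda>i j. real (Suc j) * a i (Suc j)) x j = real (Suc j) * ccoef a x (Suc j)"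
  unfolding ccoef_def by (simp add: mult.assoc infsum_cmult_right')

lemma powser_unique0:
  fixes c :: "nat \<Rightarrow> real"
  assumes "0 < \<delta>" "\<And>y. \<bar>y\<bar> < \<delta> \<Longrightarrow> (\<lambda>k. c k * y^k) sums 0"
  shows "c n = 0"
proof -
  have "c n = 0 \<and> (\<forall>y. \<bar>y\<bar> < \<delta> \<longrightarrow> (\<lambda>k. c (k+n) * y^k) sums 0)"
  proof (induction n)
    case 0
    have "(\<lambda>k. c k * 0^k) sums 0" by (rule assms(2)) (simp add: assms(1))
    hence "c 0 = 0" by (rule powser_sums_zero_iff[THEN iffD1])
    thus ?case using assms by simp
  next
    case (Suc n)
    hence cn: "c n = 0" and S: "\<And>y. \<bar>y\<bar> < \<delta> \<Longrightarrow> (\<lambda>k. c (k+n) * y^k) sums 0" by auto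
    have nz: "(\<lambda>k. c (k + Suc n) * y^k) sums 0" if "\<bar>y\<bar> < \<delta>" "y \<noteq> 0" for y
    proof -
      define h where "h = (\<lambda>k. c (k+n) * y^k)"
      have "h sums (0 + h 0)" using S[OF that(1)] cn by (simp add: h_def)
      hence "(\<lambda>k. h (Suc k)) sums 0" using sums_Suc_iff[of h 0] by simp
      hence "(\<lambda>k. c (Suc k + n) * y^(Suc k)) sums (0 + c (0+n) * y^0)"
        using cn by (simp add: h_def)
      hence "(\<lambda>k. y * (c (k + Suc n) * y^k)) sums 0" using cn by (simp add: mult_ac)
      hence "(\<lambda>k. inverse y * (y * (c (k + Suc n) * y^k))) sums (inverse y * 0)"
        by (rule sums_mult)
      thus ?thesis using that(2) by (simp add: mult.assoc[symmetric])
    qed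
    define T where "T = (\<lambda>y. \<Sum>k. c (k + Suc n) * y^k)"
    have sK: "summable (\<lambda>k. c (k + Suc n) * (\<delta>/2)^k)"
      using nz[of "\<delta>/2"] assms(1) by (auto simp: sums_summable)
    have cont: "isCont T 0" unfolding T_def
      by (rule isCont_powser[OF sK]) (use assms in auto)
    have "(T \<longlongrightarrow> T 0) (at 0)" using cont by (simp add: isCont_def)
    moreover have "\<forall>\<^sub>F y in at (0::real). T y = 0"
    proof -
      have "\<forall>\<^sub>F y in at (0::real). \<bar>y\<bar> < \<delta> \<and> y \<noteq> 0"
        unfolding eventually_at using assms(1) by (auto intro!: exI[of _ \<delta>] simp: dist_real_def)
      thus ?thesis by eventually_elim (use nz in \<open>auto simp: T_def sums_unique[symmetric]\<close>)
    qed
    hence "(T \<longlongrightarrow> 0) (at 0)" by (simp add: tendsto_eventually)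
    ultimately have "T 0 = 0" using tendsto_unique by (metis trivial_limit_at)
    hence c1: "c (Suc n) = 0" by (simp add: T_def)
    have "(\<lambda>k. c (k + Suc n) * y^k) sums 0" if "\<bar>y\<bar> < \<delta>" for y
      using nz[OF that] c1 by (cases "y = 0") auto
    thus ?case using c1 by blast
  qed
  thus ?thesis by blast
qed

lemma cauchy_sq:
  fixes E :: "nat \<Rightarrow> real"
  assumes "PS1 E r H" "\<bar>y\<bar> < r"
  shows "(\<lambda>k. (\<Sum>i\<le>k. E i * E (k - i)) * y^k) sums (H y)^2"
proof -
  have s: "summable (\<lambda>k. norm (E k * y^k))"
    using PS1_abs_summable(1)[OF assms] by (simp add: abs_mult power_abs)
  have "(\<lambda>k. \<Sum>i\<le>k. (E i * y^i) * (E (k - i) * y^(k-i))) sums ((\<Sum>k. E k * y^k) * (\<Sum>k. E k * y^k))"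
    by (rule Cauchy_product_sums[OF s s])
  moreover have "(\<Sum>k. E k * y^k) = H y" using PS1_eq_suminf[OF assms] by simp
  moreover have "(\<Sum>i\<le>k. (E i * y^i) * (E (k - i) * y^(k-i))) = (\<Sum>i\<le>k. E i * E (k - i)) * y^k" for k
  proof -
    have "(\<Sum>i\<le>k. (E i * y^i) * (E (k - i) * y^(k-i))) = (\<Sum>i\<le>k. E i * E (k - i) * y^k)"
    proof (rule sum.cong)
      fix i assume "i \<in> {..k}"
      hence "y^i * y^(k-i) = y^k" by (simp add: power_add[symmetric])
      thus "(E i * y^i) * (E (k - i) * y^(k-i)) = E i * E (k - i) * y^k"
        by (metis (no_types, lifting) mult.assoc mult.left_commute)
    qed simp
    thus ?thesis by (simp add: sum_distrib_right)
  qed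
  ultimately show ?thesis by (simp add: power2_eq_square)
qed

lemma coef_identity:
  assumes PS: "PS2 a r F" and d: "0 < \<delta>" "\<delta> \<le> r"
    and pde: "\<And>x y. \<bar>x\<bar> < \<delta> \<Longrightarrow> \<bar>y\<bar> < \<delta> \<Longrightarrow> (Dx a (x,y))^2 + (Dy a (x,y))^2 = 1"
    and x: "\<bar>x\<bar> < \<delta>"
  shows "(\<Sum>k\<le>j. ccoef (\<lambda>i j. real (Suc i) * a (Suc i) j) x k * ccoef (\<lambda>i j. real (Suc i) * a (Suc i) j) x (j - k)
              + ccoef (\<lambda>i j. real (Suc j) * a i (Suc j)) x k * ccoef (\<lambda>i j. real (Suc j) * a i (Suc j)) x (j - k))
          = (if j = 0 then 1 else 0)"
proof -
  define E where "E = ccoef (\<lambda>i j. real (Suc i) * a (Suc i) j) x"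
  define G where "G = ccoef (\<lambda>i j. real (Suc j) * a i (Suc j)) x"
  have xr: "\<bar>x\<bar> < r" using x d by auto
  have PE: "PS1 E r (\<lambda>y. Dx a (x, y))" unfolding E_def by (rule PS2_rows[OF PS2_Dx[OF PS] xr])
  have PG: "PS1 G r (\<lambda>y. Dy a (x, y))" unfolding G_def by (rule PS2_rows[OF PS2_Dy[OF PS] xr])
  define c where "c = (\<lambda>k. (\<Sum>i\<le>k. E i * E (k - i) + G i * G (k - i)) - (if k = 0 then 1 else 0))"
  have "c j = 0"
  proof (rule powser_unique0[OF d(1)])
    fix y :: real assume y: "\<bar>y\<bar> < \<delta>"
    have yr: "\<bar>y\<bar> < r" using y d by auto
    have "(\<lambda>k. (\<Sum>i\<le>k. E i * E (k - i)) * y^k + (\<Sum>i\<le>k. G i * G (k - i)) * y^k) sums ((Dx a (x,y))^2 + (Dy a (x,y))^2)"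
      by (rule sums_add[OF cauchy_sq[OF PE yr] cauchy_sq[OF PG yr]])
    hence "(\<lambda>k. (\<Sum>i\<le>k. E i * E (k - i)) * y^k + (\<Sum>i\<le>k. G i * G (k - i)) * y^k) sums 1"
      using pde[OF x y] by simp
    from sums_diff[OF this powser_sums_if[of 0 y]]
    show "(\<lambda>k. c k * y^k) sums 0"
      by (simp add: c_def algebra_simps sum.distrib)
  qed
  thus ?thesis by (simp add: c_def E_def G_def)
qed

lemma deriv_agree:
  assumes "(f has_real_derivative D1) (at x)" "(g has_real_derivative D2) (at x)"
    "\<bar>x\<bar> < \<delta>" "\<And>t. \<bar>t\<bar> < \<delta> \<Longrightarrow> f t = g t"
  shows "D1 = D2"
proof -
  have "(g has_real_derivative D1) (at x)"
    by (rule has_field_derivative_transform_within_open[OF assms(1), of "ball 0 \<delta>"])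
       (use assms in \<open>auto simp: dist_real_def\<close>)
  thus ?thesis using assms(2) DERIV_unique by blast
qed

lemma uniq_coeffs:
  assumes PSa: "PS2 a r F" and PSb: "PS2 b r H" and d: "0 < \<delta>" "\<delta> \<le> r"
    and pdeA: "\<And>x y. \<bar>x\<bar> < \<delta> \<Longrightarrow> \<bar>y\<bar> < \<delta> \<Longrightarrow> (Dx a (x,y))^2 + (Dy a (x,y))^2 = 1"
    and pdeB: "\<And>x y. \<bar>x\<bar> < \<delta> \<Longrightarrow> \<bar>y\<bar> < \<delta> \<Longrightarrow> (Dx b (x,y))^2 + (Dy b (x,y))^2 = 1"
    and posA: "\<And>x. \<bar>x\<bar> < \<delta> \<Longrightarrow> ccoef a x 1 > 0"
    and posB: "\<And>x. \<bar>x\<bar> < \<delta> \<Longrightarrow> ccoef b x 1 > 0"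
    and c0: "\<And>x. \<bar>x\<bar> < \<delta> \<Longrightarrow> ccoef a x 0 = ccoef b x 0"
  shows "\<forall>x. \<bar>x\<bar> < \<delta> \<longrightarrow> ccoef a x n = ccoef b x n"
proof (induction n rule: less_induct)
  case (less n)
  show ?case
  proof (cases n)
    case 0 thus ?thesis using c0 by auto
  next
    case (Suc j)
    have IH: "\<And>m x. m \<le> j \<Longrightarrow> \<bar>x\<bar> < \<delta> \<Longrightarrow> ccoef a x m = ccoef b x m"
      using less Suc by auto
    show ?thesis
    proof (intro allI impI)
      fix x :: real assume x: "\<bar>x\<bar> < \<delta>"
      have xr: "\<bar>x\<bar> < r" using x d by auto
      define Ea where "Ea = ccoef (\<lambda>i j. real (Suc i) * a (Suc i) j) x"
      define Ga where "Ga = ccoef (\<lambda>i j. real (Suc j) * a i (Suc j)) x"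
      define Eb where "Eb = ccoef (\<lambda>i j. real (Suc i) * b (Suc i) j) x"
      define Gb where "Gb = ccoef (\<lambda>i j. real (Suc j) * b i (Suc j)) x"
      have GaE: "Ga k = real (Suc k) * ccoef a x (Suc k)" for k unfolding Ga_def by (rule ccoef_Dy)
      have GbE: "Gb k = real (Suc k) * ccoef b x (Suc k)" for k unfolding Gb_def by (rule ccoef_Dy)
      have EE: "Ea k = Eb k" if "k \<le> j" for k
        unfolding Ea_def Eb_def
        by (rule deriv_agree[OF ccoef_Dx[OF PSa xr] ccoef_Dx[OF PSb xr] x]) (use IH that in auto)
      have GG: "Ga k = Gb k" if "k < j" for k using IH[of "Suc k" x] that x GaE GbE by simp
      have ida: "(\<Sum>k\<le>j. Ea k * Ea (j - k) + Ga k * Ga (j - k)) = (if j = 0 then 1 else 0)"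
        unfolding Ea_def Ga_def by (rule coef_identity[OF PSa d pdeA x])
      have idb: "(\<Sum>k\<le>j. Eb k * Eb (j - k) + Gb k * Gb (j - k)) = (if j = 0 then 1 else 0)"
        unfolding Eb_def Gb_def by (rule coef_identity[OF PSb d pdeB x])
      have "Ga j = Gb j"
      proof (cases "j = 0")
        case True
        have "Ea 0 * Ea 0 + Ga 0 * Ga 0 = 1" "Eb 0 * Eb 0 + Gb 0 * Gb 0 = 1"
          using ida idb True by auto
        moreover have "Ea 0 = Eb 0" using EE by auto
        ultimately have "Ga 0 ^ 2 = Gb 0 ^ 2" by (simp add: power2_eq_square)
        moreover have "Ga 0 > 0" "Gb 0 > 0" using GaE GbE posA[OF x] posB[OF x] by auto
        ultimately show ?thesis using True by (simp add: power2_eq_iff_nonneg)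
      next
        case False
        define D where "D = Ga 0 * (Ga j - Gb j)"
        have G0: "Ga 0 = Gb 0" using GG False by auto
        have "(\<Sum>k\<le>j. (Ea k * Ea (j - k) + Ga k * Ga (j - k)) - (Eb k * Eb (j - k) + Gb k * Gb (j - k)))
            = (\<Sum>k\<le>j. (if k = 0 then D else 0) + (if k = j then D else 0))"
        proof (rule sum.cong)
          fix k assume k: "k \<in> {..j}"
          have e1: "Ea k = Eb k" "Ea (j-k) = Eb (j-k)" using EE k by auto
          show "(Ea k * Ea (j - k) + Ga k * Ga (j - k)) - (Eb k * Eb (j - k) + Gb k * Gb (j - k))
              = (if k = 0 then D else 0) + (if k = j then D else 0)"
          proof (cases "k = 0")
            case True thus ?thesis using False e1 G0 by (simp add: D_def algebra_simps)
          next
            case k0: False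
            show ?thesis
            proof (cases "k = j")
              case True thus ?thesis using k0 e1 G0 by (simp add: D_def algebra_simps)
            next
              case False
              have "Ga k = Gb k" "Ga (j-k) = Gb (j-k)" using GG k k0 False by auto
              thus ?thesis using e1 k0 False by simp
            qed
          qed
        qed simp
        also have "\<dots> = D + D" by (simp add: sum.distrib)
        finally have "D + D = 0" using ida idb False by (simp add: sum_subtractf)
        hence "D = 0" by simp
        moreover have "Ga 0 > 0" using GaE posA[OF x] by auto
        ultimately show ?thesis by (simp add: D_def)
      qed
      thus "ccoef a x n = ccoef b x n" using GaE GbE Suc by simp
    qed
  qed
qed

lemma Lambda_PS2: "f \<in> Lambda_omega \<Longrightarrow> \<exists>r>0. \<exists>a. PS2 a r f"
  unfolding Lambda_omega_def real_analytic_at0_2_def PS2_def by auto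

lemma pdx_eq: "PS2 a r f \<Longrightarrow> \<bar>x\<bar> < r \<Longrightarrow> \<bar>y\<bar> < r \<Longrightarrow> pdx f (x,y) = Dx a (x,y)"
  unfolding pdx_def using PS2_Dx_deriv DERIV_imp_deriv by fastforce

lemma pdy_eq: "PS2 a r f \<Longrightarrow> \<bar>x\<bar> < r \<Longrightarrow> \<bar>y\<bar> < r \<Longrightarrow> pdy f (x,y) = Dy a (x,y)"
  unfolding pdy_def using PS2_Dy_deriv DERIV_imp_deriv by fastforce

lemma PS1_at0: "PS1 c r H \<Longrightarrow> 0 < r \<Longrightarrow> H 0 = c 0"
  using PS1_eq_suminf[of c r H 0] by simp

lemma part1:
  assumes "f \<in> Lambda_omega" shows "(\<lambda>x. f (x, 0)) \<in> C_omega_02"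
proof -
  obtain r a where r: "r > 0" and PS: "PS2 a r f" using Lambda_PS2[OF assms] by blast
  have "PS1 (ccoef (\<lambda>i j. a j i) 0) r (\<lambda>x. f (x, 0))" using PS2_cols[OF PS, of 0] r by simp
  hence "real_analytic_at0_1 (\<lambda>x. f (x, 0))"
    unfolding real_analytic_at0_1_def PS1_def using r by blast
  moreover have "f (0,0) = 0" "pdx f (0,0) = 0" using assms unfolding Lambda_omega_def by auto
  ultimately show ?thesis unfolding C_omega_02_def pdx_def by auto
qed

lemma abs_le_dist_fst: "\<bar>x\<bar> \<le> dist (x, y) (0::real, 0::real)"
  by (simp add: dist_Pair_Pair dist_real_def real_sqrt_sum_squares_ge1)
lemma abs_le_dist_snd: "\<bar>y\<bar> \<le> dist (x, y) (0::real, 0::real)"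
  by (simp add: dist_Pair_Pair dist_real_def real_sqrt_sum_squares_ge2)

lemma dist_small: "\<bar>x\<bar> < d/2 \<Longrightarrow> \<bar>y\<bar> < d/2 \<Longrightarrow> dist (x, y) (0::real, 0::real) < d"
proof -
  assume a: "\<bar>x\<bar> < d/2" "\<bar>y\<bar> < d/2"
  have "dist (x, y) (0::real, 0::real) = sqrt (x^2 + y^2)" by (simp add: dist_Pair_Pair dist_real_def)
  also have "\<dots> \<le> sqrt ((\<bar>x\<bar> + \<bar>y\<bar>)^2)" by (rule real_sqrt_le_mono)
      (auto simp: power2_eq_square algebra_simps)
  also have "\<dots> = \<bar>x\<bar> + \<bar>y\<bar>" by simp
  finally show ?thesis using a by linarith
qed

lemma ev_square:
  assumes "\<forall>\<^sub>F p in nhds (0::real, 0::real). P p"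
  obtains d where "d > 0" "\<And>x y. \<bar>x\<bar> < d \<Longrightarrow> \<bar>y\<bar> < d \<Longrightarrow> P (x, y)"
proof -
  obtain e where e: "e > 0" "\<And>p. dist p (0,0) < e \<Longrightarrow> P p"
    using assms unfolding eventually_nhds_metric by auto
  show ?thesis
    by (rule that[of "e/2"]) (use e dist_small in auto)
qed

lemma pos_c1:
  assumes PS: "PS2 a r f" and r: "r > 0" and p1: "pdy f (0,0) = 1"
  obtains d where "d > 0" "\<And>x. \<bar>x\<bar> < d \<Longrightarrow> ccoef a x 1 > 0"
proof -
  have "isCont (\<lambda>x. ccoef a x 1) 0"
    using ccoef_Dx[OF PS, of 0 1] r DERIV_isCont by auto
  hence t: "((\<lambda>x. ccoef a x 1) \<longlongrightarrow> ccoef a 0 1) (nhds 0)"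
    by (metis isCont_def tendsto_at_iff_tendsto_nhds)
  have "Dy a (0,0) = ccoef a 0 1" unfolding Dy_def by (simp add: diffs_def)
  hence "ccoef a 0 1 = 1" using pdy_eq[OF PS, of 0 0] r p1 by simp
  hence "\<forall>\<^sub>F x in nhds 0. 0 < ccoef a x 1" using order_tendstoD(1)[OF t, of 0] by simp
  then obtain e where "e > 0" "\<And>x. dist x 0 < e \<Longrightarrow> 0 < ccoef a x 1"
    unfolding eventually_nhds_metric by auto
  thus ?thesis using that[of e] by (auto simp: dist_real_def)
qed

lemma part2:
  assumes f: "f \<in> Lambda_omega" and g: "g \<in> Lambda_omega"
    and ev: "\<forall>\<^sub>F x in nhds 0. f (x, 0) = g (x, 0)"
  shows "\<forall>\<^sub>F p in nhds (0, 0). f p = g p"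
proof -
  obtain r1 a where r1: "r1 > 0" and PS1a: "PS2 a r1 f" using Lambda_PS2[OF f] by blast
  obtain r2 b where r2: "r2 > 0" and PS1b: "PS2 b r2 g" using Lambda_PS2[OF g] by blast
  define r where "r = min r1 r2"
  have r: "r > 0" using r1 r2 by (simp add: r_def)
  have PSa: "PS2 a r f" and PSb: "PS2 b r g" using PS1a PS1b PS2_mono by (auto simp: r_def)
  obtain d1 where d1: "d1 > 0" "\<And>x y. \<bar>x\<bar> < d1 \<Longrightarrow> \<bar>y\<bar> < d1 \<Longrightarrow> 1 - (pdx f (x,y))\<^sup>2 - (pdy f (x,y))\<^sup>2 = 0"
    using ev_square[of "\<lambda>p. 1 - (pdx f p)\<^sup>2 - (pdy f p)\<^sup>2 = 0"] f unfolding Lambda_omega_def by blast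
  obtain d2 where d2: "d2 > 0" "\<And>x y. \<bar>x\<bar> < d2 \<Longrightarrow> \<bar>y\<bar> < d2 \<Longrightarrow> 1 - (pdx g (x,y))\<^sup>2 - (pdy g (x,y))\<^sup>2 = 0"
    using ev_square[of "\<lambda>p. 1 - (pdx g p)\<^sup>2 - (pdy g p)\<^sup>2 = 0"] g unfolding Lambda_omega_def by blast
  obtain d3 where d3: "d3 > 0" "\<And>x. \<bar>x\<bar> < d3 \<Longrightarrow> f (x, 0) = g (x, 0)"
    using ev unfolding eventually_nhds_metric by (auto simp: dist_real_def)
  obtain d4 where d4: "d4 > 0" "\<And>x. \<bar>x\<bar> < d4 \<Longrightarrow> ccoef a x 1 > 0"
    using pos_c1[OF PSa r] f unfolding Lambda_omega_def by blast
  obtain d5 where d5: "d5 > 0" "\<And>x. \<bar>x\<bar> < d5 \<Longrightarrow> ccoef b x 1 > 0"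
    using pos_c1[OF PSb r] g unfolding Lambda_omega_def by blast
  define \<delta> where "\<delta> = Min {r, d1, d2, d3, d4, d5}"
  have \<delta>: "0 < \<delta>" "\<delta> \<le> r" "\<delta> \<le> d1" "\<delta> \<le> d2" "\<delta> \<le> d3" "\<delta> \<le> d4" "\<delta> \<le> d5"
    using r d1 d2 d3 d4 d5 by (auto simp: \<delta>_def)
  have pdeA: "(Dx a (x,y))^2 + (Dy a (x,y))^2 = 1" if "\<bar>x\<bar> < \<delta>" "\<bar>y\<bar> < \<delta>" for x y
    using d1(2)[of x y] pdx_eq[OF PSa, of x y] pdy_eq[OF PSa, of x y] that \<delta> by auto
  have pdeB: "(Dx b (x,y))^2 + (Dy b (x,y))^2 = 1" if "\<bar>x\<bar> < \<delta>" "\<bar>y\<bar> < \<delta>" for x y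
    using d2(2)[of x y] pdx_eq[OF PSb, of x y] pdy_eq[OF PSb, of x y] that \<delta> by auto
  have c0: "ccoef a x 0 = ccoef b x 0" if "\<bar>x\<bar> < \<delta>" for x
  proof -
    have "f (x, 0) = ccoef a x 0" using PS1_at0[OF PS2_rows[OF PSa] r] that \<delta> by auto
    moreover have "g (x, 0) = ccoef b x 0" using PS1_at0[OF PS2_rows[OF PSb] r] that \<delta> by auto
    ultimately show ?thesis using d3(2)[of x] that \<delta> by auto
  qed
  have all: "\<forall>x. \<bar>x\<bar> < \<delta> \<longrightarrow> ccoef a x n = ccoef b x n" for n
    by (rule uniq_coeffs[OF PSa PSb \<delta>(1,2) pdeA pdeB _ _ c0]) (use d4 d5 \<delta> in auto)
  have eq: "f (x, y) = g (x, y)" if "\<bar>x\<bar> < \<delta>" "\<bar>y\<bar> < \<delta>" for x y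
  proof -
    have "f (x, y) = (\<Sum>j. ccoef a x j * y^j)" using PS1_eq_suminf[OF PS2_rows[OF PSa]] that \<delta> by auto
    moreover have "g (x, y) = (\<Sum>j. ccoef b x j * y^j)" using PS1_eq_suminf[OF PS2_rows[OF PSb]] that \<delta> by auto
    ultimately show ?thesis using all that by auto
  qed
  show ?thesis unfolding eventually_nhds_metric
  proof (intro exI[of _ \<delta>] conjI allI impI)
    fix p :: "real \<times> real" assume "dist p (0,0) < \<delta>"
    thus "f p = g p" using eq[of "fst p" "snd p"] abs_le_dist_fst[of "fst p" "snd p"] abs_le_dist_snd[of "snd p" "fst p"]
      by auto
  qed (use \<delta> in auto)
qed

definition alpha :: "(complex \<Rightarrow> complex) \<Rightarrow> (complex \<Rightarrow> complex) \<Rightarrow> real \<Rightarrow> nat \<Rightarrow> nat \<Rightarrow> complex" where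
 "alpha G R \<rho> i m = contour_integral (circlepath 0 \<rho>)
     (\<lambda>\<zeta>. of_nat ((i+m) choose i) * (-1)^m * G \<zeta> * R \<zeta> ^ m / \<zeta>^(i+m+1))"

lemma sphere_integrable:
  "continuous_on (sphere 0 \<rho>) h \<Longrightarrow> 0 \<le> \<rho> \<Longrightarrow> h contour_integrable_on circlepath 0 \<rho>"
  by (rule contour_integrable_continuous_circlepath) simp

lemma binom_sigma_summable:
  fixes A B :: real
  assumes "0 \<le> A" "0 \<le> B" "A + B < 1"
  shows "(\<lambda>(k,i). real (k choose i) * A^i * B^(k-i)) summable_on (Sigma UNIV (\<lambda>k. {..k}))"
proof -
  have "(\<lambda>p. real (fst p choose snd p) * A^(snd p) * B^(fst p - snd p)) summable_on (Sigma UNIV (\<lambda>k. {..k}))"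
  proof (rule summable_on_SigmaI)
    fix k :: nat
    show "((\<lambda>i. real (fst (k, i) choose snd (k, i)) * A ^ snd (k, i) * B ^ (fst (k, i) - snd (k, i))) has_sum (A+B)^k) {..k}"
      by (simp add: binomial_ring)
  next
    have "summable (\<lambda>k. (A+B)^k)" by (rule summable_geometric) (use assms in auto)
    thus "(\<lambda>k. (A+B)^k) summable_on UNIV"
      using summable_on_UNIV_nonneg_real_iff[of "\<lambda>k. (A+B)^k"] assms by auto
  qed (use assms in auto)
  thus ?thesis by (simp add: split_beta')
qed

lemma L1:
  fixes G R :: "complex \<Rightarrow> complex" and x y :: complex and \<rho> M :: real
  assumes \<rho>: "0 < \<rho>"
    and contG: "continuous_on (sphere 0 \<rho>) G" and contR: "continuous_on (sphere 0 \<rho>) R"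
    and RM: "\<And>\<zeta>. \<zeta> \<in> sphere 0 \<rho> \<Longrightarrow> norm (R \<zeta>) \<le> M"
    and xy: "norm x + norm y * M < \<rho>"
  shows "((\<lambda>(i,m). x^i * y^m * alpha G R \<rho> i m) has_sum
            contour_integral (circlepath 0 \<rho>) (\<lambda>\<zeta>. G \<zeta> / (\<zeta> - (x - y * R \<zeta>)))) UNIV"
proof -
  let ?\<gamma> = "circlepath 0 \<rho>"
  let ?S = "sphere (0::complex) \<rho>"
  have nz: "\<zeta> \<noteq> 0" if "\<zeta> \<in> ?S" for \<zeta> using that \<rho> by auto
  have nrm: "norm \<zeta> = \<rho>" if "\<zeta> \<in> ?S" for \<zeta> using that by auto
  have M0: "0 \<le> M" using RM[of "of_real \<rho>"] \<rho> by (auto intro: order_trans[OF norm_ge_zero])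
  obtain BG where BG: "BG > 0" "\<And>\<zeta>. \<zeta> \<in> ?S \<Longrightarrow> norm (G \<zeta>) \<le> BG"
  proof -
    have "bounded (G ` ?S)" by (rule compact_imp_bounded[OF compact_continuous_image[OF contG compact_sphere]])
    thus ?thesis using that unfolding bounded_pos by auto
  qed
  define \<kappa> where "\<kappa> = (norm x + norm y * M) / \<rho>"
  have \<kappa>: "0 \<le> \<kappa>" "\<kappa> < 1" using xy \<rho> M0 by (auto simp: \<kappa>_def)
  define w where "w = (\<lambda>\<zeta>. x - y * R \<zeta>)"
  have wb: "norm (w \<zeta>) \<le> \<kappa> * \<rho>" if "\<zeta> \<in> ?S" for \<zeta>
  proof -
    have "norm (w \<zeta>) \<le> norm x + norm y * norm (R \<zeta>)"
      unfolding w_def by (metis norm_mult norm_triangle_ineq4)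
    also have "\<dots> \<le> norm x + norm y * M" using RM[OF that] by (simp add: mult_left_mono)
    finally show ?thesis using \<rho> by (simp add: \<kappa>_def)
  qed
  define u where "u = (\<lambda>k \<zeta>. G \<zeta> * w \<zeta> ^ k / \<zeta>^(Suc k))"
  have ub: "norm (u k \<zeta>) \<le> BG / \<rho> * \<kappa>^k" if "\<zeta> \<in> ?S" for k \<zeta>
  proof -
    have "norm (u k \<zeta>) = norm (G \<zeta>) * norm (w \<zeta>) ^ k / \<rho>^(Suc k)"
      using nrm[OF that] by (simp add: u_def norm_mult norm_divide norm_power)
    also have "\<dots> \<le> BG * (\<kappa> * \<rho>) ^ k / \<rho>^(Suc k)"
      by (intro divide_right_mono mult_mono power_mono BG wb that) (use \<rho> BG in auto)
    also have "\<dots> = BG / \<rho> * \<kappa>^k" using \<rho> by (simp add: power_mult_distrib field_simps)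
    finally show ?thesis .
  qed
  have sumM: "summable (\<lambda>k. BG / \<rho> * \<kappa>^k)"
    by (rule summable_mult) (rule summable_geometric, use \<kappa> in auto)
  have ul: "uniform_limit ?S (\<lambda>n \<zeta>. \<Sum>k<n. u k \<zeta>) (\<lambda>\<zeta>. \<Sum>k. u k \<zeta>) sequentially"
    by (rule Weierstrass_m_test[OF _ sumM]) (use ub in auto)
  have lim_eq: "(\<Sum>k. u k \<zeta>) = G \<zeta> / (\<zeta> - w \<zeta>)" if "\<zeta> \<in> ?S" for \<zeta>
  proof -
    have "\<kappa> * \<rho> < 1 * \<rho>" by (rule mult_strict_right_mono) (use \<kappa> \<rho> in auto)
    hence "norm (w \<zeta>) < \<rho>" using wb[OF that] by linarith
    hence q: "norm (w \<zeta> / \<zeta>) < 1"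
      using nrm[OF that] \<rho> by (simp add: norm_divide field_simps)
    have e: "(\<lambda>k. u k \<zeta>) = (\<lambda>k. G \<zeta> / \<zeta> * (w \<zeta> / \<zeta>)^k)"
      by (rule ext) (simp add: u_def power_divide field_simps)
    have "(\<Sum>k. u k \<zeta>) = G \<zeta> / \<zeta> * (\<Sum>k. (w \<zeta> / \<zeta>)^k)"
      unfolding e by (rule suminf_mult[OF summable_geometric[OF q]])
    also have "\<dots> = G \<zeta> / \<zeta> * (1 / (1 - w \<zeta> / \<zeta>))" using suminf_geometric[OF q] by simp
    also have "\<dots> = G \<zeta> / (\<zeta> - w \<zeta>)"
    proof -
      have "\<zeta> - w \<zeta> \<noteq> 0" using q nz[OF that] by (auto simp: divide_self_if)
      thus ?thesis using nz[OF that] by (simp add: field_simps)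
    qed
    finally show ?thesis .
  qed
  have contu: "continuous_on ?S (u k)" for k
    unfolding u_def w_def by (intro continuous_intros contG contR) (use nz in auto)
  have intu: "u k contour_integrable_on ?\<gamma>" for k by (rule sphere_integrable[OF contu]) (use \<rho> in auto)
  define Iu where "Iu = (\<lambda>k. contour_integral ?\<gamma> (u k))"
  define I where "I = contour_integral ?\<gamma> (\<lambda>\<zeta>. G \<zeta> / (\<zeta> - (x - y * R \<zeta>)))"
  have "(\<lambda>n. contour_integral ?\<gamma> (\<lambda>\<zeta>. \<Sum>k<n. u k \<zeta>)) \<longlonglongrightarrow> contour_integral ?\<gamma> (\<lambda>\<zeta>. \<Sum>k. u k \<zeta>)"
  proof (rule contour_integral_uniform_limit_circlepath(2)[OF _ ul _ \<rho>])
    show "\<forall>\<^sub>F n in sequentially. (\<lambda>\<zeta>. \<Sum>k<n. u k \<zeta>) contour_integrable_on ?\<gamma>"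
      by (intro always_eventually allI sphere_integrable continuous_on_sum) (use contu \<rho> in auto)
  qed simp
  moreover have "contour_integral ?\<gamma> (\<lambda>\<zeta>. \<Sum>k. u k \<zeta>) = I"
    unfolding I_def by (rule contour_integral_eq) (use lim_eq \<rho> in \<open>auto simp: w_def\<close>)
  moreover have "contour_integral ?\<gamma> (\<lambda>\<zeta>. \<Sum>k<n. u k \<zeta>) = (\<Sum>k<n. Iu k)" for n
    unfolding Iu_def by (rule contour_integral_sum) (use intu in auto)
  ultimately have sumsI: "Iu sums I" by (simp add: sums_def)
  have cont_term: "continuous_on ?S (\<lambda>\<zeta>. of_nat ((i+m) choose i) * (-1)^m * G \<zeta> * R \<zeta> ^ m / \<zeta>^(i+m+1))" for i m
    by (intro continuous_intros contG contR) (use nz in auto)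
  have int_term: "(\<lambda>\<zeta>. of_nat ((i+m) choose i) * (-1)^m * G \<zeta> * R \<zeta> ^ m / \<zeta>^(i+m+1)) contour_integrable_on ?\<gamma>" for i m
    by (rule sphere_integrable[OF cont_term]) (use \<rho> in auto)
  have Iu_eq: "Iu k = (\<Sum>i\<le>k. x^i * y^(k-i) * alpha G R \<rho> i (k-i))" for k
  proof -
    have "u k \<zeta> = (\<Sum>i\<le>k. x^i * y^(k-i) * (of_nat ((i+(k-i)) choose i) * (-1)^(k-i) * G \<zeta> * R \<zeta> ^ (k-i) / \<zeta>^(i+(k-i)+1)))" for \<zeta>
    proof -
      have "w \<zeta> ^ k = (\<Sum>i\<le>k. of_nat (k choose i) * x^i * (- y * R \<zeta>)^(k-i))"
        unfolding w_def using binomial_ring[of x "- y * R \<zeta>" k] by simp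
      hence "u k \<zeta> = (\<Sum>i\<le>k. G \<zeta> * (of_nat (k choose i) * x^i * (- y * R \<zeta>)^(k-i)) / \<zeta>^(Suc k))"
        by (simp add: u_def sum_distrib_left sum_divide_distrib)
      also have "\<dots> = (\<Sum>i\<le>k. x^i * y^(k-i) * (of_nat ((i+(k-i)) choose i) * (-1)^(k-i) * G \<zeta> * R \<zeta> ^ (k-i) / \<zeta>^(i+(k-i)+1)))"
      proof (rule sum.cong[OF refl])
        fix i assume "i \<in> {..k}"
        hence ik: "i + (k - i) = k" by auto
        have pw: "(- y * R \<zeta>)^(k-i) = y^(k-i) * ((-1)^(k-i) * R \<zeta>^(k-i))"
          by (simp only: power_mult_distrib power_minus[of y "k-i"] mult_ac)
        show "G \<zeta> * (of_nat (k choose i) * x^i * (- y * R \<zeta>)^(k-i)) / \<zeta>^(Suc k) =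
           x^i * y^(k-i) * (of_nat ((i+(k-i)) choose i) * (-1)^(k-i) * G \<zeta> * R \<zeta> ^ (k-i) / \<zeta>^(i+(k-i)+1))"
          unfolding pw ik by (simp add: mult_ac)
      qed
      finally show ?thesis .
    qed
    note ue = this
    have "Iu k = contour_integral ?\<gamma> (\<lambda>\<zeta>. \<Sum>i\<le>k. x^i * y^(k-i) * (of_nat ((i+(k-i)) choose i) * (-1)^(k-i) * G \<zeta> * R \<zeta> ^ (k-i) / \<zeta>^(i+(k-i)+1)))"
      unfolding Iu_def by (rule arg_cong[where f="contour_integral ?\<gamma>"]) (rule ext, rule ue)
    also have "\<dots> = (\<Sum>i\<le>k. contour_integral ?\<gamma> (\<lambda>\<zeta>. x^i * y^(k-i) * (of_nat ((i+(k-i)) choose i) * (-1)^(k-i) * G \<zeta> * R \<zeta> ^ (k-i) / \<zeta>^(i+(k-i)+1))))"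
      by (rule contour_integral_sum[OF finite_atMost], rule contour_integrable_lmul[OF int_term])
    also have "\<dots> = (\<Sum>i\<le>k. x^i * y^(k-i) * alpha G R \<rho> i (k-i))"
      unfolding alpha_def by (rule sum.cong[OF refl], rule contour_integral_lmul[OF int_term])
    finally show ?thesis .
  qed
  have abound: "norm (alpha G R \<rho> i m) \<le> real ((i+m) choose i) * BG * M^m / \<rho>^(i+m+1) * (2*pi*\<rho>)" for i m
  proof -
    have "norm (alpha G R \<rho> i m) \<le> real ((i+m) choose i) * BG * M^m / \<rho>^(i+m+1) * (2*pi*\<rho>)"
      unfolding alpha_def
    proof (rule has_contour_integral_bound_circlepath[OF has_contour_integral_integral[OF int_term]])
      fix \<zeta> :: complex assume "norm (\<zeta> - 0) = \<rho>"
      hence z: "\<zeta> \<in> ?S" by auto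
      have "norm (of_nat ((i+m) choose i) * (-1)^m * G \<zeta> * R \<zeta> ^ m / \<zeta>^(i+m+1))
          = real ((i+m) choose i) * norm (G \<zeta>) * norm (R \<zeta>) ^ m / \<rho>^(i+m+1)"
        using nrm[OF z] by (simp add: norm_mult norm_divide norm_power)
      also have "\<dots> \<le> real ((i+m) choose i) * BG * M^m / \<rho>^(i+m+1)"
        by (intro divide_right_mono mult_mono mult_left_mono power_mono BG z RM) (use \<rho> BG(1) in auto)
      finally show "norm (of_nat ((i+m) choose i) * (-1)^m * G \<zeta> * R \<zeta> ^ m / \<zeta>^(i+m+1))
          \<le> real ((i+m) choose i) * BG * M^m / \<rho>^(i+m+1)" .
    qed (use \<rho> BG M0 in auto)
    thus ?thesis .
  qed
  define g' where "g' = (\<lambda>(k,i). x^i * y^(k-i) * alpha G R \<rho> i (k-i))"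
  define A where "A = norm x / \<rho>"
  define B where "B = norm y * M / \<rho>"
  have AB: "0 \<le> A" "0 \<le> B" "A + B < 1" using \<kappa> \<rho> M0 by (auto simp: A_def B_def \<kappa>_def add_divide_distrib)
  define h' where "h' = (\<lambda>(k,i). real (k choose i) * A^i * B^(k-i))"
  have hs: "(\<lambda>p. 2*pi*BG * h' p) summable_on (Sigma UNIV (\<lambda>k. {..k}))"
    unfolding h'_def by (rule summable_on_cmult_right[OF binom_sigma_summable[OF AB]])
  have gb: "norm (g' p) \<le> norm (2*pi*BG * h' p)" if pS: "p \<in> Sigma UNIV (\<lambda>k. {..k})" for p
  proof -
    obtain k i where p: "p = (k,i)" and ik: "i \<le> k" using pS by auto
    have "norm (g' p) = norm x ^ i * norm y ^ (k-i) * norm (alpha G R \<rho> i (k-i))"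
      by (simp add: g'_def p norm_mult norm_power)
    also have "\<dots> \<le> norm x ^ i * norm y ^ (k-i) * (real ((i+(k-i)) choose i) * BG * M^(k-i) / \<rho>^(i+(k-i)+1) * (2*pi*\<rho>))"
      by (intro mult_left_mono abound) auto
    also have "\<dots> = 2*pi*BG * (real (k choose i) * (norm x^i / \<rho>^i) * ((norm y^(k-i) * M^(k-i)) / \<rho>^(k-i)))"
      using ik \<rho> by (simp add: field_simps power_add[symmetric])
    also have "\<dots> = norm (2*pi*BG * h' p)"
      using ik \<rho> BG AB M0 by (simp add: h'_def p A_def B_def power_divide power_mult_distrib abs_mult)
    finally show ?thesis .
  qed
  have hab: "(\<lambda>p. norm (2*pi*BG * h' p)) summable_on Sigma UNIV (\<lambda>k. {..k})"
  proof -
    have "(\<lambda>p. 2*pi*BG * h' p) = (\<lambda>p. norm (2*pi*BG * h' p))"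
      using BG AB by (auto simp: h'_def fun_eq_iff)
    thus ?thesis using hs by simp
  qed
  have "(\<lambda>p. norm (g' p)) summable_on Sigma UNIV (\<lambda>k. {..k})"
    by (rule Infinite_Sum.abs_summable_on_comparison_test[OF hab]) (rule gb)
  hence gs: "g' summable_on (Sigma UNIV (\<lambda>k. {..k}))" by (rule Infinite_Sum.abs_summable_summable)
  have gS: "(g' has_sum infsum g' (Sigma UNIV (\<lambda>k. {..k}))) (Sigma UNIV (\<lambda>k. {..k}))"
    using gs by simp
  have "(Iu has_sum infsum g' (Sigma UNIV (\<lambda>k. {..k}))) UNIV"
  proof (rule has_sum_SigmaD[OF gS])
    fix k :: nat
    show "((\<lambda>i. g' (k, i)) has_sum Iu k) {..k}" by (simp add: g'_def Iu_eq)
  qed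
  hence "Iu sums infsum g' (Sigma UNIV (\<lambda>k. {..k}))" by (rule has_sum_imp_sums)
  hence "infsum g' (Sigma UNIV (\<lambda>k. {..k})) = I" using sumsI sums_unique2 by blast
  hence gI: "(g' has_sum I) (Sigma UNIV (\<lambda>k. {..k}))" using gS by simp
  have "((\<lambda>(i,m). x^i * y^m * alpha G R \<rho> i m) has_sum I) UNIV \<longleftrightarrow> (g' has_sum I) (Sigma UNIV (\<lambda>k. {..k}))"
    by (rule has_sum_reindex_bij_witness[where i = "\<lambda>(k,i). (i, k - i)" and j = "\<lambda>(i,m). (i+m, i)"])
       (auto simp: g'_def)
  thus ?thesis using gI by (simp add: I_def)
qed

lemma contour_eval:
  fixes H R :: "complex \<Rightarrow> complex" and x y s :: complex
  assumes \<rho>: "0 < \<rho>" "\<rho> < \<rho>0"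
    and holH: "H holomorphic_on ball 0 \<rho>0" and holR: "R holomorphic_on ball 0 \<rho>0"
    and Lb: "\<And>z. z \<in> cball 0 \<rho> \<Longrightarrow> norm (deriv R z) \<le> L"
    and yL: "norm y * L < 1"
    and s: "s \<in> ball 0 \<rho>" "s + y * R s - x = 0"
    and circ: "\<And>\<zeta>. \<zeta> \<in> sphere 0 \<rho> \<Longrightarrow> \<zeta> + y * R \<zeta> - x \<noteq> 0"
  shows "contour_integral (circlepath 0 \<rho>) (\<lambda>\<zeta>. H \<zeta> * (1 + y * deriv R \<zeta>) / (\<zeta> - (x - y * R \<zeta>)))
         = 2 * of_real pi * \<i> * H s"
proof -
  define \<phi> where "\<phi> = (\<lambda>\<zeta>. \<zeta> + y * R \<zeta> - x)"
  have opn: "open (ball (0::complex) \<rho>0)" by simp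
  have cb: "cball 0 \<rho> \<subseteq> ball (0::complex) \<rho>0" using \<rho> by auto
  have Rd: "(R has_field_derivative deriv R z) (at z)" if "z \<in> ball 0 \<rho>0" for z
    using holR that by (simp add: holomorphic_derivI[OF holR opn])
  have \<phi>d: "(\<phi> has_field_derivative (1 + y * deriv R z)) (at z)" if "z \<in> ball 0 \<rho>0" for z
    unfolding \<phi>_def by (rule derivative_eq_intros Rd[OF that] refl)+ simp
  have hol\<phi>: "\<phi> holomorphic_on ball 0 \<rho>0" unfolding \<phi>_def by (intro holomorphic_intros holR)
  have Ls: "norm (R z - R w) \<le> L * norm (z - w)" if "z \<in> cball 0 \<rho>" "w \<in> cball 0 \<rho>" for z w
  proof (rule field_differentiable_bound[OF convex_cball _ _ that])
    fix \<xi> assume "\<xi> \<in> cball (0::complex) \<rho>"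
    thus "(R has_field_derivative deriv R \<xi>) (at \<xi> within cball 0 \<rho>)"
      using Rd cb by (blast intro: has_field_derivative_at_within)
  qed (use Lb in auto)
  have L0: "0 \<le> L" using Lb[of 0] \<rho> by (auto intro: order_trans[OF norm_ge_zero])
  have uniq: "\<zeta> = s" if "\<zeta> \<in> cball 0 \<rho>" "\<phi> \<zeta> = 0" for \<zeta>
  proof (rule ccontr)
    assume ne: "\<zeta> \<noteq> s"
    have "\<zeta> - s = - y * (R \<zeta> - R s)" using that(2) s(2) by (simp add: \<phi>_def algebra_simps)
    hence "norm (\<zeta> - s) = norm y * norm (R \<zeta> - R s)" by (simp add: norm_mult)
    also have "\<dots> \<le> norm y * (L * norm (\<zeta> - s))"
      by (rule mult_left_mono[OF Ls[OF that(1)]]) (use s in auto)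
    finally have "norm (\<zeta> - s) * 1 \<le> norm (\<zeta> - s) * (norm y * L)" by (simp add: mult_ac)
    moreover have "norm (\<zeta> - s) > 0" using ne by auto
    ultimately have "1 \<le> norm y * L" by (simp add: mult_le_cancel_left_pos)
    thus False using yL by simp
  qed
  define u where "u = (\<lambda>z. if z = s then deriv \<phi> s else (\<phi> z - \<phi> s) / (z - s))"
  have sb: "s \<in> ball 0 \<rho>0" using s \<rho> by auto
  have holu: "u holomorphic_on ball 0 \<rho>0" unfolding u_def
    by (rule pole_lemma[OF hol\<phi>]) (use sb in simp)
  have \<phi>s: "\<phi> s = 0" using s by (simp add: \<phi>_def)
  have dphis: "deriv \<phi> s = 1 + y * deriv R s" using \<phi>d[OF sb] by (simp add: DERIV_imp_deriv)
  have unz: "u z \<noteq> 0" if "z \<in> cball 0 \<rho>" for z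
  proof (cases "z = s")
    case True
    have "norm (y * deriv R s) \<le> norm y * L" using Lb[of s] s by (simp add: norm_mult mult_left_mono)
    hence "y * deriv R s \<noteq> -1" using yL by auto
    hence "1 + y * deriv R s \<noteq> 0" by (metis add.commute add_eq_0_iff)
    thus ?thesis using True dphis by (simp add: u_def)
  next
    case False
    hence "\<phi> z \<noteq> 0" using uniq that by blast
    thus ?thesis using False \<phi>s by (simp add: u_def)
  qed
  have fact: "\<phi> z = (z - s) * u z" if "z \<in> ball 0 \<rho>0" for z
    using \<phi>s by (cases "z = s") (auto simp: u_def)
  have ud: "(u has_field_derivative deriv u z) (at z)" if "z \<in> ball 0 \<rho>0" for z
    using holomorphic_derivI[OF holu opn that] .
  have dphi: "1 + y * deriv R z = u z + (z - s) * deriv u z" if "z \<in> ball 0 \<rho>0" for z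
  proof -
    have "((\<lambda>z. (z - s) * u z) has_field_derivative (u z + (z - s) * deriv u z)) (at z)"
      by (rule derivative_eq_intros ud[OF that] refl)+ simp
    hence "(\<phi> has_field_derivative (u z + (z - s) * deriv u z)) (at z)"
      by (rule has_field_derivative_transform_within_open[OF _ opn that]) (use fact in auto)
    thus ?thesis using \<phi>d[OF that] DERIV_unique by blast
  qed
  have holdu: "deriv u holomorphic_on ball 0 \<rho>0" by (rule holomorphic_deriv[OF holu opn])
  have eqi: "H \<zeta> * (1 + y * deriv R \<zeta>) / (\<zeta> - (x - y * R \<zeta>)) = H \<zeta> / (\<zeta> - s) + H \<zeta> * deriv u \<zeta> / u \<zeta>"
    if "\<zeta> \<in> sphere 0 \<rho>" for \<zeta>
  proof -
    have zb: "\<zeta> \<in> ball 0 \<rho>0" "\<zeta> \<in> cball 0 \<rho>" using that cb by auto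
    have zs: "\<zeta> \<noteq> s" using that s by auto
    have e1: "\<zeta> - (x - y * R \<zeta>) = (\<zeta> - s) * u \<zeta>" using fact[OF zb(1)] by (simp add: \<phi>_def algebra_simps)
    have un: "u \<zeta> \<noteq> 0" using unz zb by auto
    have zs': "\<zeta> - s \<noteq> 0" using zs by auto
    show ?thesis unfolding e1 dphi[OF zb(1)] using un zs' by (simp add: field_simps)
  qed
  have i1: "((\<lambda>\<zeta>. H \<zeta> / (\<zeta> - s)) has_contour_integral (2 * of_real pi * \<i> * H s)) (circlepath 0 \<rho>)"
  proof (rule Cauchy_integral_circlepath)
    show "continuous_on (cball 0 \<rho>) H" using holomorphic_on_imp_continuous_on[OF holH] cb
      by (rule continuous_on_subset)
    show "H holomorphic_on ball 0 \<rho>" by (rule holomorphic_on_subset[OF holH]) (use \<rho> in auto)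
  qed (use s in auto)
  have i2: "((\<lambda>\<zeta>. H \<zeta> * deriv u \<zeta> / u \<zeta>) has_contour_integral 0) (circlepath 0 \<rho>)"
  proof (rule Cauchy_theorem_convex_simple[OF _ convex_cball])
    show "(\<lambda>\<zeta>. H \<zeta> * deriv u \<zeta> / u \<zeta>) holomorphic_on cball 0 \<rho>"
      by (intro holomorphic_intros holomorphic_on_subset[OF holH cb] holomorphic_on_subset[OF holdu cb]
                holomorphic_on_subset[OF holu cb]) (use unz in auto)
  qed (use \<rho> in auto)
  have "((\<lambda>\<zeta>. H \<zeta> / (\<zeta> - s) + H \<zeta> * deriv u \<zeta> / u \<zeta>) has_contour_integral (2 * of_real pi * \<i> * H s)) (circlepath 0 \<rho>)"
    using has_contour_integral_add[OF i1 i2] by simp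
  hence "((\<lambda>\<zeta>. H \<zeta> * (1 + y * deriv R \<zeta>) / (\<zeta> - (x - y * R \<zeta>))) has_contour_integral (2 * of_real pi * \<i> * H s)) (circlepath 0 \<rho>)"
    by (rule has_contour_integral_eq) (use eqi \<rho> in \<open>auto simp: eqi\<close>)
  thus ?thesis by (rule contour_integral_unique)
qed

definition cf :: "(complex \<Rightarrow> complex) \<Rightarrow> (complex \<Rightarrow> complex) \<Rightarrow> real \<Rightarrow> nat \<Rightarrow> nat \<Rightarrow> complex" where
  "cf H R \<rho> i m = (alpha H R \<rho> i m + (if m = 0 then 0 else alpha (\<lambda>\<zeta>. H \<zeta> * deriv R \<zeta>) R \<rho> i (m - 1)))
      / (2 * of_real pi * \<i>)"

lemma shift_y:
  fixes x y S :: complex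
  assumes "((\<lambda>(i,m). x^i * y^m * \<beta> i m) has_sum S) UNIV"
  shows "((\<lambda>(i,m). x^i * y^m * (if m = 0 then 0 else \<beta> i (m-1))) has_sum (y * S)) UNIV"
proof -
  let ?g = "\<lambda>(i,m). x^i * y^m * (if m = 0 then 0 else \<beta> i (m-1))"
  let ?h = "\<lambda>(i::nat,m::nat). (i, Suc m)"
  have inj: "inj_on ?h UNIV" by (auto simp: inj_on_def)
  have "((\<lambda>p. y * (case p of (i,m) \<Rightarrow> x^i * y^m * \<beta> i m)) has_sum y * S) UNIV"
    by (rule has_sum_cmult_right[OF assms])
  moreover have "(\<lambda>p. y * (case p of (i,m) \<Rightarrow> x^i * y^m * \<beta> i m)) = ?g \<circ> ?h"
    by (auto simp: fun_eq_iff)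
  ultimately have "((?g \<circ> ?h) has_sum y * S) UNIV" by simp
  hence "(?g has_sum y * S) (?h ` UNIV)" using has_sum_reindex[OF inj, of ?g] by blast
  moreover have "?h ` UNIV = {p. snd p \<noteq> 0}"
  proof (rule set_eqI, rule iffI)
    fix p assume "p \<in> ?h ` UNIV" thus "p \<in> {p. snd p \<noteq> 0}" by auto
  next
    fix p :: "nat \<times> nat" assume "p \<in> {p. snd p \<noteq> 0}"
    hence "p = ?h (fst p, snd p - 1)" by (cases p) auto
    thus "p \<in> ?h ` UNIV" by (metis rangeI)
  qed
  ultimately have "(?g has_sum y * S) {p. snd p \<noteq> 0}" by simp
  thus ?thesis by (rule has_sum_cong_neutral[THEN iffD1, rotated -1]) auto
qed

lemma norm_R_bound:
  fixes Rc :: "complex \<Rightarrow> complex"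
  assumes \<rho>: "0 < \<rho>" "\<rho> < \<rho>0" and holR: "Rc holomorphic_on ball 0 \<rho>0"
    and Lb: "\<And>z. z \<in> cball 0 \<rho> \<Longrightarrow> norm (deriv Rc z) \<le> Lp"
    and z: "z \<in> cball 0 \<rho>" "w \<in> cball 0 \<rho>"
  shows "norm (Rc z - Rc w) \<le> Lp * norm (z - w)"
proof (rule field_differentiable_bound[OF convex_cball _ _ z])
  fix \<xi> assume "\<xi> \<in> cball (0::complex) \<rho>"
  hence "\<xi> \<in> ball 0 \<rho>0" using \<rho> by auto
  thus "(Rc has_field_derivative deriv Rc \<xi>) (at \<xi> within cball 0 \<rho>)"
    using holomorphic_derivI[OF holR open_ball] by (blast intro: has_field_derivative_at_within)
qed (use Lb in auto)

lemma series_H: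
  fixes H Rc :: "complex \<Rightarrow> complex" and x y s :: complex
  assumes \<rho>: "0 < \<rho>" "\<rho> < \<rho>0"
    and holH: "H holomorphic_on ball 0 \<rho>0" and holR: "Rc holomorphic_on ball 0 \<rho>0"
    and Lb: "\<And>z. z \<in> cball 0 \<rho> \<Longrightarrow> norm (deriv Rc z) \<le> Lp" and R0: "Rc 0 = 0"
    and xy: "norm x + norm y * (Lp * \<rho>) < \<rho>" and yL: "norm y * Lp < 1"
    and s: "s \<in> ball 0 \<rho>" "s + y * Rc s - x = 0"
  shows "((\<lambda>(i,m). cf H Rc \<rho> i m * x^i * y^m) has_sum H s) UNIV"
proof -
  let ?\<gamma> = "circlepath 0 \<rho>"
  let ?S = "sphere (0::complex) \<rho>"
  have Sb: "?S \<subseteq> ball 0 \<rho>0" using \<rho> by auto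
  have RM: "norm (Rc \<zeta>) \<le> Lp * \<rho>" if "\<zeta> \<in> ?S" for \<zeta>
  proof -
    have "norm (Rc \<zeta> - Rc 0) \<le> Lp * norm (\<zeta> - 0)"
      by (rule norm_R_bound[OF \<rho> holR Lb]) (use that \<rho> in auto)
    thus ?thesis using that R0 by simp
  qed
  have Lp0: "0 \<le> Lp" using Lb[of 0] \<rho> by (auto intro: order_trans[OF norm_ge_zero])
  have den: "\<zeta> - (x - y * Rc \<zeta>) \<noteq> 0" if "\<zeta> \<in> ?S" for \<zeta>
  proof
    assume "\<zeta> - (x - y * Rc \<zeta>) = 0"
    hence "\<zeta> = x - y * Rc \<zeta>" by simp
    hence "norm \<zeta> \<le> norm x + norm y * norm (Rc \<zeta>)"
      by (metis norm_mult norm_triangle_ineq4)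
    also have "\<dots> \<le> norm x + norm y * (Lp * \<rho>)" using RM[OF that] by (simp add: mult_left_mono)
    finally show False using xy that by simp
  qed
  have contH: "continuous_on ?S H"
    by (rule continuous_on_subset[OF holomorphic_on_imp_continuous_on[OF holH] Sb])
  have contR: "continuous_on ?S Rc"
    by (rule continuous_on_subset[OF holomorphic_on_imp_continuous_on[OF holR] Sb])
  have contdR: "continuous_on ?S (deriv Rc)"
    by (rule continuous_on_subset[OF holomorphic_on_imp_continuous_on[OF holomorphic_deriv[OF holR open_ball]] Sb])
  have "contour_integral ?\<gamma> (\<lambda>\<zeta>. H \<zeta> * (1 + y * deriv Rc \<zeta>) / (\<zeta> - (x - y * Rc \<zeta>))) = 2 * of_real pi * \<i> * H s"
  proof (rule contour_eval[OF \<rho> holH holR Lb yL s])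
    fix \<zeta> assume "\<zeta> \<in> ?S" thus "\<zeta> + y * Rc \<zeta> - x \<noteq> 0" using den[of \<zeta>] by (simp add: algebra_simps)
  qed auto
  moreover have "contour_integral ?\<gamma> (\<lambda>\<zeta>. H \<zeta> * (1 + y * deriv Rc \<zeta>) / (\<zeta> - (x - y * Rc \<zeta>)))
     = contour_integral ?\<gamma> (\<lambda>\<zeta>. H \<zeta> / (\<zeta> - (x - y * Rc \<zeta>)))
       + y * contour_integral ?\<gamma> (\<lambda>\<zeta>. (H \<zeta> * deriv Rc \<zeta>) / (\<zeta> - (x - y * Rc \<zeta>)))"
  proof -
    have i1: "(\<lambda>\<zeta>. H \<zeta> / (\<zeta> - (x - y * Rc \<zeta>))) contour_integrable_on ?\<gamma>"
      by (rule sphere_integrable) (use \<rho> den in \<open>auto intro!: continuous_intros contH contR\<close>)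
    have i2: "(\<lambda>\<zeta>. (H \<zeta> * deriv Rc \<zeta>) / (\<zeta> - (x - y * Rc \<zeta>))) contour_integrable_on ?\<gamma>"
      by (rule sphere_integrable) (use \<rho> den in \<open>auto intro!: continuous_intros contH contR contdR\<close>)
    have "contour_integral ?\<gamma> (\<lambda>\<zeta>. H \<zeta> * (1 + y * deriv Rc \<zeta>) / (\<zeta> - (x - y * Rc \<zeta>)))
       = contour_integral ?\<gamma> (\<lambda>\<zeta>. H \<zeta> / (\<zeta> - (x - y * Rc \<zeta>)) + y * ((H \<zeta> * deriv Rc \<zeta>) / (\<zeta> - (x - y * Rc \<zeta>))))"
      by (rule contour_integral_eq) (simp add: field_simps add_divide_distrib)
    also have "\<dots> = contour_integral ?\<gamma> (\<lambda>\<zeta>. H \<zeta> / (\<zeta> - (x - y * Rc \<zeta>)))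
       + contour_integral ?\<gamma> (\<lambda>\<zeta>. y * ((H \<zeta> * deriv Rc \<zeta>) / (\<zeta> - (x - y * Rc \<zeta>))))"
      by (rule contour_integral_add[OF i1 contour_integrable_lmul[OF i2]])
    also have "\<dots> = contour_integral ?\<gamma> (\<lambda>\<zeta>. H \<zeta> / (\<zeta> - (x - y * Rc \<zeta>)))
       + y * contour_integral ?\<gamma> (\<lambda>\<zeta>. (H \<zeta> * deriv Rc \<zeta>) / (\<zeta> - (x - y * Rc \<zeta>)))"
      by (simp only: contour_integral_lmul[OF i2])
    finally show ?thesis .
  qed
  ultimately have tot: "contour_integral ?\<gamma> (\<lambda>\<zeta>. H \<zeta> / (\<zeta> - (x - y * Rc \<zeta>)))
       + y * contour_integral ?\<gamma> (\<lambda>\<zeta>. (H \<zeta> * deriv Rc \<zeta>) / (\<zeta> - (x - y * Rc \<zeta>))) = 2 * of_real pi * \<i> * H s"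
    by simp
  have A1: "((\<lambda>(i,m). x^i * y^m * alpha H Rc \<rho> i m) has_sum
            contour_integral ?\<gamma> (\<lambda>\<zeta>. H \<zeta> / (\<zeta> - (x - y * Rc \<zeta>)))) UNIV"
    by (rule L1[OF \<rho>(1) contH contR RM xy])
  have A2: "((\<lambda>(i,m). x^i * y^m * alpha (\<lambda>\<zeta>. H \<zeta> * deriv Rc \<zeta>) Rc \<rho> i m) has_sum
            contour_integral ?\<gamma> (\<lambda>\<zeta>. (H \<zeta> * deriv Rc \<zeta>) / (\<zeta> - (x - y * Rc \<zeta>)))) UNIV"
    by (rule L1[OF \<rho>(1) _ contR RM xy]) (intro continuous_intros contH contdR)
  have "((\<lambda>p. (case p of (i,m) \<Rightarrow> x^i * y^m * alpha H Rc \<rho> i m)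
            + (case p of (i,m) \<Rightarrow> x^i * y^m * (if m = 0 then 0 else alpha (\<lambda>\<zeta>. H \<zeta> * deriv Rc \<zeta>) Rc \<rho> i (m-1))))
         has_sum (2 * of_real pi * \<i> * H s)) UNIV"
    using has_sum_add[OF A1 shift_y[OF A2]] tot by simp
  from has_sum_cmult_right[OF this, of "inverse (2 * of_real pi * \<i>)"]
  show ?thesis
    by (simp add: cf_def split_beta' field_simps)
qed

lemma cps_holo:
  assumes "PS1 b r C"
  shows "(\<lambda>z. \<Sum>n. complex_of_real (b n) * z^n) holomorphic_on ball 0 r"
    and "\<And>t. \<bar>t\<bar> < r \<Longrightarrow> (\<Sum>n. complex_of_real (b n) * (complex_of_real t)^n) = complex_of_real (C t)"
proof -
  show "(\<lambda>z. \<Sum>n. complex_of_real (b n) * z^n) holomorphic_on ball 0 r"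
    unfolding holomorphic_on_def
  proof
    fix z :: complex assume z: "z \<in> ball 0 r"
    define K where "K = (norm z + r)/2"
    have K: "norm z < K" "K < r" using z by (auto simp: K_def)
    have K0: "K > 0" using K(1) norm_ge_zero[of z] by linarith
    have "summable (\<lambda>n. b n * K^n)" using PS1_abs_summable(2)[OF assms, of K] K K0 by auto
    hence s: "summable (\<lambda>n. complex_of_real (b n) * (complex_of_real K)^n)"
      using summable_of_real[of "\<lambda>n. b n * K^n"] by simp
    have "DERIV (\<lambda>z. \<Sum>n. complex_of_real (b n) * z^n) z :> (\<Sum>n. diffs (\<lambda>n. complex_of_real (b n)) n * z^n)"
      by (rule termdiffs_strong[OF s]) (use K in simp)
    thus "(\<lambda>z. \<Sum>n. complex_of_real (b n) * z^n) field_differentiable at z within ball 0 r"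
      using field_differentiable_def field_differentiable_at_within by blast
  qed
  fix t :: real assume t: "\<bar>t\<bar> < r"
  have "summable (\<lambda>n. b n * t^n)" using PS1_abs_summable(2)[OF assms t] .
  hence "(\<Sum>n. complex_of_real (b n * t^n)) = complex_of_real (\<Sum>n. b n * t^n)" by (rule suminf_of_real[symmetric])
  thus "(\<Sum>n. complex_of_real (b n) * (complex_of_real t)^n) = complex_of_real (C t)"
    using PS1_eq_suminf[OF assms t] by simp
qed

lemma Re_has_sum:
  assumes "((\<lambda>(i,m). c i m * complex_of_real x^i * complex_of_real y^m) has_sum complex_of_real v) UNIV"
  shows "((\<lambda>(i,m). Re (c i m) * x^i * y^m) has_sum v) UNIV"
proof -
  from has_sum_bounded_linear[OF bounded_linear_Re assms]
  have "((\<lambda>p. Re (case p of (i,m) \<Rightarrow> c i m * complex_of_real x^i * complex_of_real y^m)) has_sum v) UNIV" by simp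
  moreover have "(\<lambda>p. Re (case p of (i,m) \<Rightarrow> c i m * complex_of_real x^i * complex_of_real y^m))
      = (\<lambda>(i,m). Re (c i m) * x^i * y^m)"
    by (auto simp: fun_eq_iff simp flip: of_real_power of_real_mult)
  ultimately show ?thesis by simp
qed

lemma alg_r: "(Q::real) > 0 \<Longrightarrow> Q^2 = 1 - P^2 \<Longrightarrow> (P1 * Q - P * (- P * P1 / Q)) / (Q * Q) = P1 / Q^3"
proof -
  assume a: "Q > 0" "Q^2 = 1 - P^2"
  have "(P1 * Q - P * (- P * P1 / Q)) / (Q * Q) = P1 * (Q^2 + P^2) / Q^3"
    using a(1) by (simp add: field_simps power2_eq_square power3_eq_cube)
  thus ?thesis using a by simp
qed

lemma alg_w: "(Q::real) > 0 \<Longrightarrow> Q^2 = 1 - P^2 \<Longrightarrow> (0 * Q - 1 * (- P * P1 / Q)) / (Q * Q) = P * P1 / Q^3"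
  by (simp add: field_simps power2_eq_square power3_eq_cube)

lemma existence:
  assumes "\<psi> \<in> C_omega_02"
  shows "\<exists>f \<in> Lambda_omega. \<forall>\<^sub>F x in nhds 0. f (x, 0) = \<psi> x"
proof -
  obtain r0 a0 where r0: "r0 > 0" and PS\<psi>: "PS1 a0 r0 \<psi>"
    using assms unfolding C_omega_02_def real_analytic_at0_1_def PS1_def by blast
  have \<psi>0: "\<psi> 0 = 0" and d\<psi>0: "deriv \<psi> 0 = 0" using assms by (auto simp: C_omega_02_def)
  define p where "p = (\<lambda>t. \<Sum>i. diffs a0 i * t^i)"
  define p1 where "p1 = (\<lambda>t. \<Sum>i. diffs (diffs a0) i * t^i)"
  have PSp: "PS1 (diffs a0) r0 p" unfolding p_def by (rule PS1_diffs[OF PS\<psi>])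
  have d\<psi>: "(\<psi> has_real_derivative p t) (at t)" if "\<bar>t\<bar> < r0" for t
    unfolding p_def by (rule PS1_deriv[OF PS\<psi> that])
  have dp: "(p has_real_derivative p1 t) (at t)" if "\<bar>t\<bar> < r0" for t
    unfolding p1_def by (rule PS1_deriv[OF PSp that])
  have p0: "p 0 = 0" using d\<psi>[of 0] r0 d\<psi>0 DERIV_imp_deriv by fastforce
  define \<Psi> where "\<Psi> = (\<lambda>z. \<Sum>n. complex_of_real (a0 n) * z^n)"
  define Pc where "Pc = (\<lambda>z. \<Sum>n. complex_of_real (diffs a0 n) * z^n)"
  have hol\<Psi>r: "\<Psi> holomorphic_on ball 0 r0" unfolding \<Psi>_def by (rule cps_holo(1)[OF PS\<psi>])
  have holPr: "Pc holomorphic_on ball 0 r0" unfolding Pc_def by (rule cps_holo(1)[OF PSp])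
  have \<Psi>r: "\<Psi> (of_real t) = of_real (\<psi> t)" if "\<bar>t\<bar> < r0" for t
    using cps_holo(2)[OF PS\<psi> that] by (simp add: \<Psi>_def)
  have Pr: "Pc (of_real t) = of_real (p t)" if "\<bar>t\<bar> < r0" for t
    using cps_holo(2)[OF PSp that] by (simp add: Pc_def)
  have Pc0: "Pc 0 = 0" using Pr[of 0] r0 p0 by simp
  have "isCont Pc 0"
    by (rule field_differentiable_imp_continuous_at[OF holomorphic_on_imp_differentiable_at[OF holPr open_ball]])
       (use r0 in simp)
  hence "(Pc \<longlongrightarrow> 0) (nhds 0)" using Pc0 by (metis isCont_def tendsto_at_iff_tendsto_nhds)
  hence "\<forall>\<^sub>F z in nhds 0. dist (Pc z) 0 < 1/2" by (rule tendstoD) simp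
  then obtain \<rho>1 where \<rho>1: "\<rho>1 > 0" "\<And>z. dist z 0 < \<rho>1 \<Longrightarrow> dist (Pc z) 0 < 1/2"
    unfolding eventually_nhds_metric by blast
  define \<rho>0 where "\<rho>0 = min \<rho>1 r0"
  have \<rho>0: "\<rho>0 > 0" "\<rho>0 \<le> r0" using \<rho>1 r0 by (auto simp: \<rho>0_def)
  have Pb: "norm (Pc z) < 1/2" if "z \<in> ball 0 \<rho>0" for z
    using \<rho>1(2)[of z] that by (auto simp: \<rho>0_def dist_norm)
  have ball_sub: "ball (0::complex) \<rho>0 \<subseteq> ball 0 r0" using \<rho>0 by auto
  have holP: "Pc holomorphic_on ball 0 \<rho>0" by (rule holomorphic_on_subset[OF holPr ball_sub])
  have hol\<Psi>: "\<Psi> holomorphic_on ball 0 \<rho>0" by (rule holomorphic_on_subset[OF hol\<Psi>r ball_sub])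
  define Qc where "Qc = (\<lambda>z. csqrt (1 - (Pc z)^2))"
  define Rc where "Rc = (\<lambda>z. Pc z / Qc z)"
  define Wc where "Wc = (\<lambda>z. 1 / Qc z)"
  have re_pos: "Re (1 - (Pc z)^2) > 0" if "z \<in> ball 0 \<rho>0" for z
  proof -
    have "norm (Pc z) ^ 2 < (1/2)^2" by (rule power_strict_mono[OF Pb[OF that]]) auto
    hence "norm ((Pc z)^2) < 1/4" by (simp add: norm_power power_divide)
    hence "norm ((Pc z)^2) < 1" by linarith
    hence "Re ((Pc z)^2) < 1" using complex_Re_le_cmod[of "(Pc z)^2"] by linarith
    thus ?thesis by simp
  qed
  have notneg: "1 - (Pc z)^2 \<notin> \<real>\<^sub>\<le>\<^sub>0" if "z \<in> ball 0 \<rho>0" for z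
    using re_pos[OF that] by (auto simp: complex_nonpos_Reals_iff)
  have Qnz: "Qc z \<noteq> 0" if "z \<in> ball 0 \<rho>0" for z
  proof -
    have "1 - (Pc z)^2 \<noteq> 0" using re_pos[OF that] by auto
    thus ?thesis by (simp add: Qc_def)
  qed
  have hol1: "(\<lambda>z. 1 - (Pc z)^2) holomorphic_on ball 0 \<rho>0"
    by (intro holomorphic_on_diff holomorphic_on_const holomorphic_on_power holP)
  have holQ: "Qc holomorphic_on ball 0 \<rho>0"
    unfolding Qc_def by (rule holomorphic_on_csqrt'[OF hol1 notneg])
  have holR: "Rc holomorphic_on ball 0 \<rho>0"
    unfolding Rc_def by (rule holomorphic_on_divide[OF holP holQ Qnz])
  have holW: "Wc holomorphic_on ball 0 \<rho>0"
    unfolding Wc_def by (rule holomorphic_on_divide[OF holomorphic_on_const holQ Qnz])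
  define q where "q = (\<lambda>t. sqrt (1 - (p t)^2))"
  define r where "r = (\<lambda>t. p t / q t)"
  define w where "w = (\<lambda>t. 1 / q t)"
  have pb: "\<bar>p t\<bar> < 1/2" if "\<bar>t\<bar> < \<rho>0" for t
    using Pb[of "of_real t"] Pr[of t] that \<rho>0 by auto
  have qpos: "q t > 0" if "\<bar>t\<bar> < \<rho>0" for t
  proof -
    have "(p t)^2 < 1" using pb[OF that] by (simp add: abs_square_less_1)
    thus ?thesis by (simp add: q_def)
  qed
  have qsq: "(q t)^2 = 1 - (p t)^2" if "\<bar>t\<bar> < \<rho>0" for t
  proof -
    have "(p t)^2 < 1" using pb[OF that] by (simp add: abs_square_less_1)
    thus ?thesis by (simp add: q_def)
  qed
  have Qr: "Qc (of_real t) = of_real (q t)" if "\<bar>t\<bar> < \<rho>0" for t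
  proof -
    have "1 - (Pc (of_real t))^2 = complex_of_real (1 - (p t)^2)" using Pr[of t] that \<rho>0 by simp
    moreover have "(p t)^2 \<le> 1" using pb[OF that] by (simp add: abs_square_le_1)
    ultimately show ?thesis by (simp add: Qc_def q_def)
  qed
  have Rr: "Rc (of_real t) = of_real (r t)" if "\<bar>t\<bar> < \<rho>0" for t
    using Pr[of t] Qr[OF that] that \<rho>0 by (simp add: Rc_def r_def)
  have Wr: "Wc (of_real t) = of_real (w t)" if "\<bar>t\<bar> < \<rho>0" for t
    using Qr[OF that] by (simp add: Wc_def w_def)
  have r0': "r 0 = 0" using p0 by (simp add: r_def)
  have Rc0: "Rc 0 = 0" using Rr[of 0] \<rho>0 r0' by simp
  have \<rho>0r: "\<rho>0 \<le> r0" using \<rho>0 by simp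
  have dq: "(q has_real_derivative (- p t * p1 t / q t)) (at t)" if t: "\<bar>t\<bar> < \<rho>0" for t
  proof -
    have tr: "\<bar>t\<bar> < r0" using t \<rho>0 by simp
    have d1: "((\<lambda>t. 1 - (p t)^2) has_real_derivative (- (2 * p t * p1 t))) (at t)"
      using dp[OF tr] by (auto intro!: derivative_eq_intros)
    have pos: "0 < 1 - (p t)^2" using qpos[OF t] qsq[OF t] by (metis zero_less_power2 less_numeral_extra(3) power2_less_0 qpos that)
    have "((\<lambda>t. sqrt (1 - (p t)^2)) has_real_derivative inverse (sqrt (1 - (p t)^2)) / 2 * (- (2 * p t * p1 t))) (at t)"
      by (rule DERIV_chain2[OF DERIV_real_sqrt[OF pos] d1])
    thus ?thesis by (simp add: q_def field_simps)
  qed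
  define r1 where "r1 = (\<lambda>t. p1 t / (q t)^3)"
  define w1 where "w1 = (\<lambda>t. p t * p1 t / (q t)^3)"
  have dr: "(r has_real_derivative r1 t) (at t)" if t: "\<bar>t\<bar> < \<rho>0" for t
  proof -
    have tr: "\<bar>t\<bar> < r0" using t \<rho>0 by simp
    have "(r has_real_derivative (p1 t * q t - p t * (- p t * p1 t / q t)) / (q t * q t)) (at t)"
      unfolding r_def by (rule DERIV_divide[OF dp[OF tr] dq[OF t]]) (use qpos[OF t] in simp)
    thus ?thesis using alg_r[OF qpos[OF t] qsq[OF t]] by (simp add: r1_def)
  qed
  have dw: "(w has_real_derivative w1 t) (at t)" if t: "\<bar>t\<bar> < \<rho>0" for t
  proof -
    have "(w has_real_derivative (0 * q t - 1 * (- p t * p1 t / q t)) / (q t * q t)) (at t)"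
      unfolding w_def by (rule DERIV_divide[OF DERIV_const dq[OF t]]) (use qpos[OF t] in simp)
    moreover have "q t * (q t * q t) = q t ^ 3" by (simp add: power3_eq_cube)
    ultimately show ?thesis by (simp add: w1_def)
  qed
  define \<rho> where "\<rho> = \<rho>0 / 2"
  have \<rho>: "0 < \<rho>" "\<rho> < \<rho>0" using \<rho>0 by (auto simp: \<rho>_def)
  have "continuous_on (cball 0 \<rho>) (deriv Rc)"
    by (rule continuous_on_subset[OF holomorphic_on_imp_continuous_on[OF holomorphic_deriv[OF holR open_ball]]])
       (use \<rho> in auto)
  hence "bounded (deriv Rc ` cball 0 \<rho>)"
    by (intro compact_imp_bounded compact_continuous_image compact_cball)
  then obtain Lp where Lp: "Lp > 0" "\<And>z. z \<in> cball 0 \<rho> \<Longrightarrow> norm (deriv Rc z) \<le> Lp"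
    unfolding bounded_pos by auto
  define \<delta> where "\<delta> = min (\<rho>/4) (1 / (2 * Lp))"
  have \<delta>: "0 < \<delta>" "\<delta> \<le> \<rho>/4" "\<delta> \<le> 1 / (2 * Lp)" using \<rho> Lp by (auto simp: \<delta>_def)
  have yLp: "\<bar>y\<bar> * Lp < 1/2" if "\<bar>y\<bar> < \<delta>" for y
  proof -
    have "\<bar>y\<bar> * Lp < (1 / (2 * Lp)) * Lp" using that \<delta> Lp by (intro mult_strict_right_mono) auto
    thus ?thesis using Lp by simp
  qed
  have rlip: "\<bar>r t1 - r t2\<bar> \<le> Lp * \<bar>t1 - t2\<bar>" if "\<bar>t1\<bar> \<le> \<rho>" "\<bar>t2\<bar> \<le> \<rho>" for t1 t2
  proof -
    have "norm (Rc (of_real t1) - Rc (of_real t2)) \<le> Lp * norm (of_real t1 - of_real t2 :: complex)"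
      by (rule norm_R_bound[OF \<rho> holR Lp(2)]) (use that in auto)
    moreover have "\<bar>t1\<bar> < \<rho>0" "\<bar>t2\<bar> < \<rho>0" using that \<rho> by auto
    ultimately show ?thesis using Rr by (simp flip: of_real_diff)
  qed
  have rbound: "\<bar>y * r t\<bar> \<le> 1/2 * \<bar>t\<bar>" if "\<bar>t\<bar> \<le> \<rho>" "\<bar>y\<bar> < \<delta>" for t y
  proof -
    have "\<bar>r t\<bar> \<le> Lp * \<bar>t\<bar>" using rlip[of t 0] that \<rho> r0' by auto
    hence "\<bar>y * r t\<bar> \<le> \<bar>y\<bar> * (Lp * \<bar>t\<bar>)" by (simp add: abs_mult mult_left_mono)
    also have "\<dots> = (\<bar>y\<bar> * Lp) * \<bar>t\<bar>" by simp
    also have "\<dots> \<le> 1/2 * \<bar>t\<bar>" using yLp[OF that(2)] by (intro mult_right_mono) auto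
    finally show ?thesis .
  qed
  have uniq: "t1 = t2" if "\<bar>t1\<bar> \<le> \<rho>" "\<bar>t2\<bar> \<le> \<rho>" "t1 + y * r t1 = x" "t2 + y * r t2 = x" "\<bar>y\<bar> < \<delta>"
    for t1 t2 x y
  proof -
    have "t1 - t2 = - y * (r t1 - r t2)" using that(3,4) by (simp add: algebra_simps)
    hence "\<bar>t1 - t2\<bar> = \<bar>y\<bar> * \<bar>r t1 - r t2\<bar>" by (simp add: abs_mult)
    also have "\<dots> \<le> \<bar>y\<bar> * (Lp * \<bar>t1 - t2\<bar>)" by (intro mult_left_mono rlip that) auto
    also have "\<dots> = (\<bar>y\<bar> * Lp) * \<bar>t1 - t2\<bar>" by simp
    also have "\<dots> \<le> 1/2 * \<bar>t1 - t2\<bar>" using yLp[OF that(5)] by (intro mult_right_mono) auto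
    finally show ?thesis by simp
  qed
  have ex: "\<exists>t. \<bar>t\<bar> \<le> \<rho>/2 \<and> t + y * r t = x" if "\<bar>x\<bar> < \<delta>" "\<bar>y\<bar> < \<delta>" for x y
  proof -
    have cont: "continuous_on {-\<rho>/2..\<rho>/2} (\<lambda>t. t + y * r t)"
    proof (rule DERIV_continuous_on)
      fix t assume "t \<in> {-\<rho>/2..\<rho>/2}"
      hence t: "\<bar>t\<bar> < \<rho>0" using \<rho> by auto
      show "((\<lambda>t. t + y * r t) has_real_derivative (1 + y * r1 t)) (at t within {-\<rho>/2..\<rho>/2})"
        by (rule has_field_derivative_at_within) (use dr[OF t] in \<open>auto intro!: derivative_eq_intros\<close>)
    qed
    have a: "\<bar>y * r (-\<rho>/2)\<bar> \<le> 1/2 * \<bar>-\<rho>/2\<bar>" by (rule rbound) (use \<rho> that in auto)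
    have b: "\<bar>y * r (\<rho>/2)\<bar> \<le> 1/2 * \<bar>\<rho>/2\<bar>" by (rule rbound) (use \<rho> that in auto)
    have "-\<rho>/2 + y * r (-\<rho>/2) \<le> x" "x \<le> \<rho>/2 + y * r (\<rho>/2)"
      using a b that \<delta> \<rho> by (auto simp: abs_le_iff)
    from IVT'[of "\<lambda>t. t + y * r t", OF this _ cont] \<rho>
    obtain t where "-\<rho>/2 \<le> t" "t \<le> \<rho>/2" "t + y * r t = x" by auto
    thus ?thesis by (intro exI[of _ t]) auto
  qed
  define sx where "sx = (\<lambda>x y. THE t. \<bar>t\<bar> \<le> \<rho> \<and> t + y * r t = x)"
  have sx_eq: "sx x y = t" if "\<bar>t\<bar> \<le> \<rho>" "t + y * r t = x" "\<bar>y\<bar> < \<delta>" for x y t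
    unfolding sx_def by (rule the_equality) (use that uniq in blast)+
  have sol: "\<bar>sx x y\<bar> \<le> \<rho>/2 \<and> sx x y + y * r (sx x y) = x" if xy: "\<bar>x\<bar> < \<delta>" "\<bar>y\<bar> < \<delta>" for x y
  proof -
    obtain t where t: "\<bar>t\<bar> \<le> \<rho>/2" "t + y * r t = x" using ex[OF xy] by blast
    have "sx x y = t" by (rule sx_eq) (use t \<rho> xy in auto)
    thus ?thesis using t by simp
  qed
  define S2 where "S2 = (\<lambda>pt. sx (fst pt) (snd pt))"
  define f where "f = (\<lambda>pt. \<psi> (S2 pt) + snd pt * w (S2 pt))"
  have sol2: "\<bar>S2 (x,y)\<bar> \<le> \<rho>/2" "S2 (x,y) + y * r (S2 (x,y)) = x" if "\<bar>x\<bar> < \<delta>" "\<bar>y\<bar> < \<delta>" for x y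
    using sol[OF that] by (auto simp: S2_def)
  have S2small: "\<bar>S2 (x,y)\<bar> < \<rho>0" if "\<bar>x\<bar> < \<delta>" "\<bar>y\<bar> < \<delta>" for x y
    using sol2[OF that] \<rho> by auto
  have ser: "((\<lambda>(i,m). cf H Rc \<rho> i m * complex_of_real x^i * complex_of_real y^m) has_sum H (of_real (S2 (x,y)))) UNIV"
    if hH: "H holomorphic_on ball 0 \<rho>0" and xy: "\<bar>x\<bar> < \<delta>" "\<bar>y\<bar> < \<delta>" for H x y
  proof (rule series_H[OF \<rho> hH holR Lp(2) Rc0])
    have A: "(\<bar>y\<bar> * Lp) * \<rho> \<le> 1/2 * \<rho>" using yLp[OF xy(2)] \<rho> by (intro mult_right_mono) auto
    have B: "\<bar>y\<bar> * (Lp * \<rho>) = (\<bar>y\<bar> * Lp) * \<rho>" by (simp only: mult.assoc)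
    have "\<bar>x\<bar> + \<bar>y\<bar> * (Lp * \<rho>) < \<rho>" using A B xy \<delta> \<rho> by linarith
    thus "norm (complex_of_real x) + norm (complex_of_real y) * (Lp * \<rho>) < \<rho>" by simp
    show "norm (complex_of_real y) * Lp < 1" using yLp[OF xy(2)] by simp
    show "complex_of_real (S2 (x,y)) \<in> ball 0 \<rho>" using sol2[OF xy] \<rho> by simp
    have "complex_of_real (S2 (x,y)) + complex_of_real y * Rc (complex_of_real (S2 (x,y))) - complex_of_real x
       = complex_of_real (S2 (x,y) + y * r (S2 (x,y)) - x)" using Rr[OF S2small[OF xy]] by simp
    thus "complex_of_real (S2 (x,y)) + complex_of_real y * Rc (complex_of_real (S2 (x,y))) - complex_of_real x = 0"
      using sol2[OF xy] by simp
  qed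
  have PSs: "PS2 (\<lambda>i m. Re (cf (\<lambda>z. z) Rc \<rho> i m)) \<delta> S2"
    unfolding PS2_def
  proof (intro allI impI)
    fix x y :: real assume "\<bar>x\<bar> < \<delta> \<and> \<bar>y\<bar> < \<delta>"
    hence "((\<lambda>(i,m). cf (\<lambda>z. z) Rc \<rho> i m * complex_of_real x^i * complex_of_real y^m) has_sum complex_of_real (S2 (x,y))) UNIV"
      using ser[of "\<lambda>z. z" x y] by (auto intro: holomorphic_on_id)
    thus "((\<lambda>(i,m). Re (cf (\<lambda>z. z) Rc \<rho> i m) * x^i * y^m) has_sum S2 (x,y)) UNIV"
      by (rule Re_has_sum)
  qed
  define cF where "cF = (\<lambda>i m. cf \<Psi> Rc \<rho> i m + (if m = 0 then 0 else cf Wc Rc \<rho> i (m-1)))"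
  have PSf: "PS2 (\<lambda>i m. Re (cF i m)) \<delta> f"
    unfolding PS2_def
  proof (intro allI impI)
    fix x y :: real assume xy: "\<bar>x\<bar> < \<delta> \<and> \<bar>y\<bar> < \<delta>"
    let ?s = "S2 (x,y)"
    have h1: "((\<lambda>(i,m). cf \<Psi> Rc \<rho> i m * complex_of_real x^i * complex_of_real y^m) has_sum \<Psi> (of_real ?s)) UNIV"
      using ser[OF hol\<Psi>] xy by auto
    have "((\<lambda>(i,m). cf Wc Rc \<rho> i m * complex_of_real x^i * complex_of_real y^m) has_sum Wc (of_real ?s)) UNIV"
      using ser[OF holW] xy by auto
    moreover have "(\<lambda>(i,m). cf Wc Rc \<rho> i m * complex_of_real x^i * complex_of_real y^m)
        = (\<lambda>(i,m). complex_of_real x^i * complex_of_real y^m * cf Wc Rc \<rho> i m)"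
      by (simp add: fun_eq_iff)
    ultimately have "((\<lambda>(i,m). complex_of_real x^i * complex_of_real y^m * cf Wc Rc \<rho> i m) has_sum Wc (of_real ?s)) UNIV"
      by simp
    from shift_y[OF this]
    have h2: "((\<lambda>(i,m). complex_of_real x^i * complex_of_real y^m * (if m = 0 then 0 else cf Wc Rc \<rho> i (m-1)))
        has_sum (complex_of_real y * Wc (of_real ?s))) UNIV" .
    have "(\<lambda>p. (case p of (i,m) \<Rightarrow> cf \<Psi> Rc \<rho> i m * complex_of_real x^i * complex_of_real y^m)
       + (case p of (i,m) \<Rightarrow> complex_of_real x^i * complex_of_real y^m * (if m = 0 then 0 else cf Wc Rc \<rho> i (m-1))))
       = (\<lambda>(i,m). cF i m * complex_of_real x^i * complex_of_real y^m)"
      by (auto simp: fun_eq_iff cF_def distrib_right)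
    with has_sum_add[OF h1 h2]
    have "((\<lambda>(i,m). cF i m * complex_of_real x^i * complex_of_real y^m) has_sum
        (\<Psi> (of_real ?s) + complex_of_real y * Wc (of_real ?s))) UNIV"
      by simp
    moreover have "\<Psi> (of_real ?s) + complex_of_real y * Wc (of_real ?s) = complex_of_real (f (x,y))"
      using \<Psi>r[of ?s] Wr[of ?s] S2small[of x y] xy \<rho>0 by (simp add: f_def)
    ultimately show "((\<lambda>(i,m). Re (cF i m) * x^i * y^m) has_sum f (x,y)) UNIV"
      by (intro Re_has_sum) simp
  qed
  have derivs: "pdx f (x,y) = p (S2 (x,y)) \<and> pdy f (x,y) = q (S2 (x,y))" if xy: "\<bar>x\<bar> < \<delta>" "\<bar>y\<bar> < \<delta>" for x y
  proof -
    define s where "s = S2 (x,y)"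
    have s0: "\<bar>s\<bar> < \<rho>0" using S2small[OF xy] by (simp add: s_def)
    have sr0: "\<bar>s\<bar> < r0" using s0 \<rho>0 by simp
    define DX where "DX = Dx (\<lambda>i m. Re (cf (\<lambda>z. z) Rc \<rho> i m)) (x,y)"
    define DY where "DY = Dy (\<lambda>i m. Re (cf (\<lambda>z. z) Rc \<rho> i m)) (x,y)"
    have Dsx: "((\<lambda>t. S2 (t, y)) has_real_derivative DX) (at x)"
      unfolding DX_def by (rule PS2_Dx_deriv[OF PSs xy])
    have Dsy: "((\<lambda>t. S2 (x, t)) has_real_derivative DY) (at y)"
      unfolding DY_def by (rule PS2_Dy_deriv[OF PSs xy])
    have drs: "(r has_real_derivative r1 s) (at s)" by (rule dr[OF s0])
    have dws: "(w has_real_derivative w1 s) (at s)" by (rule dw[OF s0])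
    have d\<psi>s: "(\<psi> has_real_derivative p s) (at s)" by (rule d\<psi>[OF sr0])
    have crx: "((\<lambda>t. r (S2 (t, y))) has_real_derivative r1 s * DX) (at x)"
      using DERIV_chain2[OF _ Dsx, of r "r1 s"] drs by (simp add: s_def)
    have cwx: "((\<lambda>t. w (S2 (t, y))) has_real_derivative w1 s * DX) (at x)"
      using DERIV_chain2[OF _ Dsx, of w "w1 s"] dws by (simp add: s_def)
    have c\<psi>x: "((\<lambda>t. \<psi> (S2 (t, y))) has_real_derivative p s * DX) (at x)"
      using DERIV_chain2[OF _ Dsx, of \<psi> "p s"] d\<psi>s by (simp add: s_def)
    have cry: "((\<lambda>t. r (S2 (x, t))) has_real_derivative r1 s * DY) (at y)"
      using DERIV_chain2[OF _ Dsy, of r "r1 s"] drs by (simp add: s_def)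
    have cwy: "((\<lambda>t. w (S2 (x, t))) has_real_derivative w1 s * DY) (at y)"
      using DERIV_chain2[OF _ Dsy, of w "w1 s"] dws by (simp add: s_def)
    have c\<psi>y: "((\<lambda>t. \<psi> (S2 (x, t))) has_real_derivative p s * DY) (at y)"
      using DERIV_chain2[OF _ Dsy, of \<psi> "p s"] d\<psi>s by (simp add: s_def)
    have idx: "DX + y * (r1 s * DX) = 1"
    proof (rule deriv_agree[OF DERIV_add[OF Dsx DERIV_cmult[OF crx]] DERIV_ident xy(1)])
      fix t :: real assume "\<bar>t\<bar> < \<delta>"
      thus "S2 (t, y) + y * r (S2 (t, y)) = t" using sol2[of t y] xy by auto
    qed
    have idy0: "DY + (1 * r (S2 (x,y)) + (r1 s * DY) * y) = 0"
    proof (rule deriv_agree[OF DERIV_add[OF Dsy DERIV_mult[OF DERIV_ident cry]] DERIV_const xy(2)])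
      fix t :: real assume "\<bar>t\<bar> < \<delta>"
      thus "S2 (x, t) + t * r (S2 (x, t)) = x" using sol2[of x t] xy by auto
    qed
    have idy: "DY + (1 * r s + (r1 s * DY) * y) = 0" using idy0 by (simp add: s_def)
    have w1r: "w1 s = p s * r1 s" by (simp add: w1_def r1_def)
    have fx: "((\<lambda>t. f (t, y)) has_real_derivative (p s * DX + y * (w1 s * DX))) (at x)"
      unfolding f_def using DERIV_add[OF c\<psi>x DERIV_cmult[OF cwx, of y]] by simp
    have "p s * DX + y * (w1 s * DX) = p s * (DX + y * (r1 s * DX))" by (simp add: w1r algebra_simps)
    hence fx': "((\<lambda>t. f (t, y)) has_real_derivative p s) (at x)" using fx idx by simp
    have fy: "((\<lambda>t. f (x, t)) has_real_derivative (p s * DY + (1 * w s + (w1 s * DY) * y))) (at y)"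
      unfolding f_def using DERIV_add[OF c\<psi>y DERIV_mult[OF DERIV_ident cwy]] by (simp add: s_def)
    have "p s * DY + (1 * w s + (w1 s * DY) * y) = p s * (DY + (r1 s * DY) * y) + w s"
      by (simp add: w1r algebra_simps)
    also have "\<dots> = p s * (- r s) + w s"
    proof -
      have e: "DY + (r1 s * DY) * y = - r s" using idy by linarith
      show ?thesis by (simp only: e)
    qed
    also have "\<dots> = (1 - (p s)^2) / q s" using qpos[OF s0] by (simp add: r_def w_def field_simps power2_eq_square)
    also have "\<dots> = (q s)^2 / q s" using qsq[OF s0] by simp
    also have "\<dots> = q s" using qpos[OF s0] by (simp add: power2_eq_square)
    finally have fy': "((\<lambda>t. f (x, t)) has_real_derivative q s) (at y)" using fy by simp
    show ?thesis using DERIV_imp_deriv[OF fx'] DERIV_imp_deriv[OF fy'] by (simp add: pdx_def pdy_def s_def)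
  qed
  have S00: "S2 (0,0) = 0" unfolding S2_def by (rule sx_eq) (use \<rho> \<delta> in auto)
  have Sx0: "S2 (x,0) = x" if "\<bar>x\<bar> < \<delta>" for x unfolding S2_def by (rule sx_eq) (use that \<rho> \<delta> in auto)
  have fL: "f \<in> Lambda_omega"
    unfolding Lambda_omega_def
  proof (intro CollectI conjI)
    show "real_analytic_at0_2 f" unfolding real_analytic_at0_2_def
      by (rule exI[of _ \<delta>], rule conjI[OF \<delta>(1)], rule exI[of _ "\<lambda>i m. Re (cF i m)"], rule PSf[unfolded PS2_def])
    show "f (0,0) = 0" using S00 \<psi>0 by (simp add: f_def)
    show "pdx f (0,0) = 0" using derivs[of 0 0] \<delta> S00 p0 by simp
    show "pdy f (0,0) = 1" using derivs[of 0 0] \<delta> S00 p0 by (simp add: q_def)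
    show "\<forall>\<^sub>F pt in nhds (0,0). 1 - (pdx f pt)\<^sup>2 - (pdy f pt)\<^sup>2 = 0"
      unfolding eventually_nhds_metric
    proof (intro exI[of _ \<delta>] conjI allI impI)
      fix pt :: "real \<times> real" assume "dist pt (0,0) < \<delta>"
      hence xy: "\<bar>fst pt\<bar> < \<delta>" "\<bar>snd pt\<bar> < \<delta>"
        using abs_le_dist_fst[of "fst pt" "snd pt"] abs_le_dist_snd[of "snd pt" "fst pt"] by auto
      have "pdx f pt = p (S2 pt)" "pdy f pt = q (S2 pt)" using derivs[OF xy] by auto
      moreover have "\<bar>S2 pt\<bar> < \<rho>0" using S2small[OF xy] by simp
      ultimately show "1 - (pdx f pt)\<^sup>2 - (pdy f pt)\<^sup>2 = 0" using qsq by simp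
    qed (use \<delta> in auto)
  qed
  have "\<forall>\<^sub>F x in nhds 0. f (x, 0) = \<psi> x"
    unfolding eventually_nhds_metric
    by (intro exI[of _ \<delta>] conjI allI impI) (use \<delta> Sx0 in \<open>auto simp: f_def dist_real_def\<close>)
  thus ?thesis using fL by blast
qed

theorem proposition1p2:
  shows "(\<forall>f \<in> Lambda_omega. (\<lambda>x. f (x, 0)) \<in> C_omega_02)
    \<and> (\<forall>f \<in> Lambda_omega. \<forall>g \<in> Lambda_omega.
          (\<forall>\<^sub>F x in nhds 0. f (x, 0) = g (x, 0)) \<longrightarrow>
          (\<forall>\<^sub>F p in nhds (0, 0). f p = g p))
    \<and> (\<forall>\<psi> \<in> C_omega_02. \<exists>f \<in> Lambda_omega. \<forall>\<^sub>F x in nhds 0. f (x, 0) = \<psi> x)"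
  using part1 part2 existence by blast

end
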